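(* For any set $\Gamma$ of sentences over $\sigma_1$ and any sentence $F$ over $\sigma_1$, $F$ can be derived from $\Gamma$ in $\mathit{HT}_{\#}^{\omega}$ if and only if every standard HT-interpretation of $\sigma_1$ that satisfies (in the sense of $\models_{ht}$) all members of $\Gamma$ satisfies $F$.
   Context: Precomputed terms: a totally ordered set containing all numerals $\overline n$ ($n$ an integer, in 1-1 correspondence with the integers), all symbolic constants and possibly other symbols, in which numerals are contiguous and ordered as the integers. Formulas are two-sorted, with sort general and its subsort integer. Signature $\sigma_0$: numerals as integer object constants; other precomputed terms as general object constants; $|\cdot|,+,-,\times$ as function constants on integers; predicate constants $p/n$ (written $p(\mathbf t)$) with general arguments; binary predicate constants $\neq,<,>,\le,\ge$ ("comparison symbols") with general arguments ($=$ is logical equality). $\sigma_1$ adds, for disjoint lists $\mathbf X,\mathbf V$ of distinct general variables and formula $F$ over $\sigma_0$ with free variables among $\mathbf X,\mathbf V$, predicate constants $\mathit{Atleast}^{\mathbf X;\mathbf V}_F,\mathit{Atmost}^{\mathbf X;\mathbf V}_F$ with $|\mathbf V|+1$ general arguments. Comparison symbols are extensional; $p/n$, $\mathit{Atleast}$, $\mathit{Atmost}$ are intensional. A standard interpretation of $\sigma_0$ has general domain the precomputed terms, integer domain the numerals, object constants denoting themselves, arithmetic symbols with their usual meaning and comparison symbols given by the order on precomputed terms. $\mathit{Std}$: all sentences over $\sigma_0$ without symbols $p/n$ satisfied by standard interpretations. For a precomputed term $r$: $\exists_{\ge r}\mathbf X\,F$ is $\exists\mathbf X_1\cdots\mathbf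 X_n(\bigwedge_{i=1}^nF^{\mathbf X}_{\mathbf X_i}\wedge\bigwedge_{i<j}\neg(\mathbf X_i=\mathbf X_j))$ if $r=\overline n>\overline0$, $\top$ if $r\le\overline0$, $\bot$ if $r>\overline n$ for all $n$; $\exists_{\le r}\mathbf X\,F$ is $\forall\mathbf X_1\cdots\mathbf X_{n+1}(\bigwedge_{i=1}^{n+1}F^{\mathbf X}_{\mathbf X_i}\to\bigvee_{i<j}\mathbf X_i=\mathbf X_j)$ if $r=\overline n\ge\overline0$, $\bot$ if $r<\overline0$, $\top$ if $r>\overline n$ for all $n$. $\mathit{Defs}$: all sentences $\forall\mathbf V(\mathit{Atleast}^{\mathbf X;\mathbf V}_F(\mathbf V,r)\leftrightarrow\exists_{\ge r}\mathbf XF)$ and $\forall\mathbf V(\mathit{Atmost}^{\mathbf X;\mathbf V}_F(\mathbf V,r)\leftrightarrow\exists_{\le r}\mathbf XF)$. $\mathit{HT}_{\#}^{\omega}$ is the natural deduction system for first-order intuitionistic logic with equality over the two-sorted signature $\sigma_1$ with sequents $\Gamma\Rightarrow F$ ($\Gamma$ finite; $\Rightarrow F$ identified with $F$), extended by all formulas $F\vee(F\to G)\vee\neg G$ and $\exists X(F\to\forall XF)$ over $\sigma_1$, the axioms $\mathit{Std}$ and $\mathit{Defs}$, and the $\omega$-rules: from $\Gamma\Rightarrow F^X_t$ for all precomputed terms $t$ infer $\Gamma\Rightarrow\forall XF$ ($X$ general), and from $\Gamma\Rightarrow F^N_{\overline n}$ for all integers $n$ infer $\Gamma\Rightarrow\forall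 NF$ ($N$ integer). Deriving $F$ from $\Gamma$ means deriving it using members of $\Gamma$ as assumptions. HT-interpretations: for an interpretation $I$ of $\sigma_1$, $\sigma_1^I$ adds names $d^*$ for domain elements; $I^{\downarrow}$ is the set of atoms $p(\mathbf d^* )$ with $p$ intensional and $I\models p(\mathbf d^* )$; an HT-interpretation is $\langle\mathcal H,I\rangle$ with $\mathcal H\subseteq I^{\downarrow}$. $\models_{ht}$: intensional atoms $p(\mathbf t)$ hold iff $p(\mathbf d^* )\in\mathcal H$ for $\mathbf d$ the values of $\mathbf t$ in $I$; extensional atoms and equalities iff $I$ satisfies them; $\bot$ never; $\neg F$ iff $I\not\models F$; $\wedge,\vee$ componentwise; $F\to G$ iff ($\not\models_{ht}F$ or $\models_{ht}G$) and $I\models F\to G$; $\forall$/$\exists$ over all/some domain elements. An HT-interpretation $\langle\mathcal H,I\rangle$ of $\sigma_1$ is standard if the restriction of $I$ to $\sigma_0$ is standard and $\langle\mathcal H,I\rangle\models_{ht}\mathit{Defs}$. *)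

theory Defs
  imports Main "HOL-Library.Countable"
begin

section \<open>Syntax of sigma_1\<close>

text \<open>Variables: general variables GV n and integer variables IV n.\<close>
datatype var = GV nat | IV nat

datatype cmp = CNeq | CLt | CGt | CLe | CGe

text \<open>Terms; object constants are the precomputed terms (type 'c).\<close>
datatype 'c trm = Var var | Cst 'c | TAbs "'c trm" | TPlus "'c trm" "'c trm"
  | TMinus "'c trm" "'c trm" | TTimes "'c trm" "'c trm"

text \<open>Formulas over sigma_1.  Pred p ts is the atom p/n(ts) with n = length ts.
  AtLeast X V F ts is the atom Atleast^{X;V}_F(ts) (same for AtMost).\<close>
datatype ('c,'p) form = Bot | Pred 'p "'c trm list" | Cmp cmp "'c trm" "'c trm"
  | Eq "'c trm" "'c trm"
  | And "('c,'p) form" "('c,'p) form" | Or "('c,'p) form" "('c,'p) form"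
  | Imp "('c,'p) form" "('c,'p) form"
  | All var "('c,'p) form" | Ex var "('c,'p) form"
  | AtLeast "nat list" "nat list" "('c,'p) form" "'c trm list"
  | AtMost "nat list" "nat list" "('c,'p) form" "'c trm list"

definition Neg :: "('c,'p) form \<Rightarrow> ('c,'p) form" where "Neg F = Imp F Bot"
definition Top :: "('c,'p) form" where "Top = Neg Bot"
definition Iff :: "('c,'p) form \<Rightarrow> ('c,'p) form \<Rightarrow> ('c,'p) form" where
  "Iff F G = And (Imp F G) (Imp G F)"

fun fvt :: "'c trm \<Rightarrow> var set" where
  "fvt (Var v) = {v}"
| "fvt (Cst c) = {}"
| "fvt (TAbs t) = fvt t"
| "fvt (TPlus a b) = fvt a \<union> fvt b"
| "fvt (TMinus a b) = fvt a \<union> fvt b"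
| "fvt (TTimes a b) = fvt a \<union> fvt b"

text \<open>Free variables (the formula inside an Atleast/Atmost symbol is part of the symbol).\<close>
fun fv :: "('c,'p) form \<Rightarrow> var set" where
  "fv Bot = {}"
| "fv (Pred p ts) = \<Union> (fvt ` set ts)"
| "fv (Cmp c a b) = fvt a \<union> fvt b"
| "fv (Eq a b) = fvt a \<union> fvt b"
| "fv (And F G) = fv F \<union> fv G"
| "fv (Or F G) = fv F \<union> fv G"
| "fv (Imp F G) = fv F \<union> fv G"
| "fv (All x F) = fv F - {x}"
| "fv (Ex x F) = fv F - {x}"
| "fv (AtLeast X V F ts) = \<Union> (fvt ` set ts)"
| "fv (AtMost X V F ts) = \<Union> (fvt ` set ts)"

fun allvars :: "('c,'p) form \<Rightarrow> var set" where
  "allvars Bot = {}"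
| "allvars (Pred p ts) = \<Union> (fvt ` set ts)"
| "allvars (Cmp c a b) = fvt a \<union> fvt b"
| "allvars (Eq a b) = fvt a \<union> fvt b"
| "allvars (And F G) = allvars F \<union> allvars G"
| "allvars (Or F G) = allvars F \<union> allvars G"
| "allvars (Imp F G) = allvars F \<union> allvars G"
| "allvars (All x F) = insert x (allvars F)"
| "allvars (Ex x F) = insert x (allvars F)"
| "allvars (AtLeast X V F ts) = \<Union> (fvt ` set ts)"
| "allvars (AtMost X V F ts) = \<Union> (fvt ` set ts)"

fun substt :: "(var \<Rightarrow> 'c trm) \<Rightarrow> 'c trm \<Rightarrow> 'c trm" where
  "substt s (Var v) = s v"
| "substt s (Cst c) = Cst c"
| "substt s (TAbs t) = TAbs (substt s t)"
| "substt s (TPlus a b) = TPlus (substt s a) (substt s b)"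
| "substt s (TMinus a b) = TMinus (substt s a) (substt s b)"
| "substt s (TTimes a b) = TTimes (substt s a) (substt s b)"

fun subst :: "(var \<Rightarrow> 'c trm) \<Rightarrow> ('c,'p) form \<Rightarrow> ('c,'p) form" where
  "subst s Bot = Bot"
| "subst s (Pred p ts) = Pred p (map (substt s) ts)"
| "subst s (Cmp c a b) = Cmp c (substt s a) (substt s b)"
| "subst s (Eq a b) = Eq (substt s a) (substt s b)"
| "subst s (And F G) = And (subst s F) (subst s G)"
| "subst s (Or F G) = Or (subst s F) (subst s G)"
| "subst s (Imp F G) = Imp (subst s F) (subst s G)"
| "subst s (All x F) = All x (subst (s(x := Var x)) F)"
| "subst s (Ex x F) = Ex x (subst (s(x := Var x)) F)"
| "subst s (AtLeast X V F ts) = AtLeast X V F (map (substt s) ts)"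
| "subst s (AtMost X V F ts) = AtMost X V F (map (substt s) ts)"

fun substok :: "(var \<Rightarrow> 'c trm) \<Rightarrow> ('c,'p) form \<Rightarrow> bool" where
  "substok s (And F G) = (substok s F \<and> substok s G)"
| "substok s (Or F G) = (substok s F \<and> substok s G)"
| "substok s (Imp F G) = (substok s F \<and> substok s G)"
| "substok s (All x F) = (substok (s(x := Var x)) F \<and> (\<forall>y\<in>fv (All x F). x \<notin> fvt (s y)))"
| "substok s (Ex x F) = (substok (s(x := Var x)) F \<and> (\<forall>y\<in>fv (Ex x F). x \<notin> fvt (s y)))"
| "substok s _ = True"

definition sub1 :: "var \<Rightarrow> 'c trm \<Rightarrow> ('c,'p) form \<Rightarrow> ('c,'p) form" where
  "sub1 x t F = subst ((\<lambda>v. Var v)(x := t)) F"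

definition sub1ok :: "var \<Rightarrow> 'c trm \<Rightarrow> ('c,'p) form \<Rightarrow> bool" where
  "sub1ok x t F = substok ((\<lambda>v. Var v)(x := t)) F"

section \<open>Well-formedness (sorts), parameterised by the numeral embedding num\<close>

fun is_int :: "(int \<Rightarrow> 'c) \<Rightarrow> 'c trm \<Rightarrow> bool" where
  "is_int num (Var (GV n)) = False"
| "is_int num (Var (IV n)) = True"
| "is_int num (Cst c) = (c \<in> range num)"
| "is_int num (TAbs t) = is_int num t"
| "is_int num (TPlus a b) = (is_int num a \<and> is_int num b)"
| "is_int num (TMinus a b) = (is_int num a \<and> is_int num b)"
| "is_int num (TTimes a b) = (is_int num a \<and> is_int num b)"

fun wf_trm :: "(int \<Rightarrow> 'c) \<Rightarrow> 'c trm \<Rightarrow> bool" where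
  "wf_trm num (Var v) = True"
| "wf_trm num (Cst c) = True"
| "wf_trm num (TAbs t) = is_int num t"
| "wf_trm num (TPlus a b) = (is_int num a \<and> is_int num b)"
| "wf_trm num (TMinus a b) = (is_int num a \<and> is_int num b)"
| "wf_trm num (TTimes a b) = (is_int num a \<and> is_int num b)"

fun sigma0 :: "('c,'p) form \<Rightarrow> bool" where
  "sigma0 (And F G) = (sigma0 F \<and> sigma0 G)"
| "sigma0 (Or F G) = (sigma0 F \<and> sigma0 G)"
| "sigma0 (Imp F G) = (sigma0 F \<and> sigma0 G)"
| "sigma0 (All x F) = sigma0 F"
| "sigma0 (Ex x F) = sigma0 F"
| "sigma0 (AtLeast X V F ts) = False"
| "sigma0 (AtMost X V F ts) = False"
| "sigma0 _ = True"

fun nopred :: "('c,'p) form \<Rightarrow> bool" where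
  "nopred (Pred p ts) = False"
| "nopred (And F G) = (nopred F \<and> nopred G)"
| "nopred (Or F G) = (nopred F \<and> nopred G)"
| "nopred (Imp F G) = (nopred F \<and> nopred G)"
| "nopred (All x F) = nopred F"
| "nopred (Ex x F) = nopred F"
| "nopred _ = True"

fun wf :: "(int \<Rightarrow> 'c) \<Rightarrow> ('c,'p) form \<Rightarrow> bool" where
  "wf num Bot = True"
| "wf num (Pred p ts) = list_all (wf_trm num) ts"
| "wf num (Cmp c a b) = (wf_trm num a \<and> wf_trm num b)"
| "wf num (Eq a b) = (wf_trm num a \<and> wf_trm num b)"
| "wf num (And F G) = (wf num F \<and> wf num G)"
| "wf num (Or F G) = (wf num F \<and> wf num G)"
| "wf num (Imp F G) = (wf num F \<and> wf num G)"
| "wf num (All x F) = wf num F"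
| "wf num (Ex x F) = wf num F"
| "wf num (AtLeast X V F ts) = (distinct X \<and> distinct V \<and> set X \<inter> set V = {} \<and> sigma0 F
     \<and> wf num F \<and> fv F \<subseteq> GV ` (set X \<union> set V)
     \<and> length ts = Suc (length V) \<and> list_all (wf_trm num) ts)"
| "wf num (AtMost X V F ts) = (distinct X \<and> distinct V \<and> set X \<inter> set V = {} \<and> sigma0 F
     \<and> wf num F \<and> fv F \<subseteq> GV ` (set X \<union> set V)
     \<and> length ts = Suc (length V) \<and> list_all (wf_trm num) ts)"

definition sym_ok :: "(int \<Rightarrow> 'c) \<Rightarrow> nat list \<Rightarrow> nat list \<Rightarrow> ('c,'p) form \<Rightarrow> bool" where
  "sym_ok num X V F = (distinct X \<and> distinct V \<and> set X \<inter> set V = {} \<and> sigma0 F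
     \<and> wf num F \<and> fv F \<subseteq> GV ` (set X \<union> set V))"

definition sentence :: "(int \<Rightarrow> 'c) \<Rightarrow> ('c,'p) form \<Rightarrow> bool" where
  "sentence num F = (wf num F \<and> fv F = {})"

fun sort_ok :: "(int \<Rightarrow> 'c) \<Rightarrow> var \<Rightarrow> 'c trm \<Rightarrow> bool" where
  "sort_ok num (GV n) t = wf_trm num t"
| "sort_ok num (IV n) t = is_int num t"

section \<open>Semantics: standard interpretations and HT-interpretations\<close>

definition toint :: "(int \<Rightarrow> 'c) \<Rightarrow> 'c \<Rightarrow> int" where
  "toint num c = the_inv num c"

fun eval :: "(int \<Rightarrow> 'c) \<Rightarrow> (var \<Rightarrow> 'c) \<Rightarrow> 'c trm \<Rightarrow> 'c" where
  "eval num env (Var v) = env v"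
| "eval num env (Cst c) = c"
| "eval num env (TAbs t) = num \<bar>toint num (eval num env t)\<bar>"
| "eval num env (TPlus a b) = num (toint num (eval num env a) + toint num (eval num env b))"
| "eval num env (TMinus a b) = num (toint num (eval num env a) - toint num (eval num env b))"
| "eval num env (TTimes a b) = num (toint num (eval num env a) * toint num (eval num env b))"

fun cmpsem :: "cmp \<Rightarrow> 'c::linorder \<Rightarrow> 'c \<Rightarrow> bool" where
  "cmpsem CNeq a b = (a \<noteq> b)"
| "cmpsem CLt a b = (a < b)"
| "cmpsem CGt a b = (a > b)"
| "cmpsem CLe a b = (a \<le> b)"
| "cmpsem CGe a b = (a \<ge> b)"

text \<open>Ground intensional atoms p(d*), Atleast(d*), Atmost(d*) (d* names of domain elements).\<close>
datatype ('c,'p) gatom = GP 'p "'c list"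
  | GAL "nat list" "nat list" "('c,'p) form" "'c list"
  | GAM "nat list" "nat list" "('c,'p) form" "'c list"

text \<open>An interpretation I of sigma_1 whose restriction to sigma_0 is standard is determined
  by the set T = I-down of intensional ground atoms it satisfies.  csat: I |= F.\<close>
fun csat :: "(int \<Rightarrow> 'c::linorder) \<Rightarrow> ('c,'p) gatom set \<Rightarrow> (var \<Rightarrow> 'c) \<Rightarrow> ('c,'p) form \<Rightarrow> bool" where
  "csat num T env Bot = False"
| "csat num T env (Pred p ts) = (GP p (map (eval num env) ts) \<in> T)"
| "csat num T env (Cmp c a b) = cmpsem c (eval num env a) (eval num env b)"
| "csat num T env (Eq a b) = (eval num env a = eval num env b)"
| "csat num T env (And F G) = (csat num T env F \<and> csat num T env G)"
| "csat num T env (Or F G) = (csat num T env F \<or> csat num T env G)"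
| "csat num T env (Imp F G) = (csat num T env F \<longrightarrow> csat num T env G)"
| "csat num T env (All (GV n) F) = (\<forall>d. csat num T (env(GV n := d)) F)"
| "csat num T env (All (IV n) F) = (\<forall>k. csat num T (env(IV n := num k)) F)"
| "csat num T env (Ex (GV n) F) = (\<exists>d. csat num T (env(GV n := d)) F)"
| "csat num T env (Ex (IV n) F) = (\<exists>k. csat num T (env(IV n := num k)) F)"
| "csat num T env (AtLeast X V F ts) = (GAL X V F (map (eval num env) ts) \<in> T)"
| "csat num T env (AtMost X V F ts) = (GAM X V F (map (eval num env) ts) \<in> T)"

text \<open>HT-satisfaction by the HT-interpretation (H, I), I given by T.\<close>
fun htsat :: "(int \<Rightarrow> 'c::linorder) \<Rightarrow> ('c,'p) gatom set \<Rightarrow> ('c,'p) gatom set \<Rightarrow> (var \<Rightarrow> 'c)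
    \<Rightarrow> ('c,'p) form \<Rightarrow> bool" where
  "htsat num H T env Bot = False"
| "htsat num H T env (Pred p ts) = (GP p (map (eval num env) ts) \<in> H)"
| "htsat num H T env (Cmp c a b) = cmpsem c (eval num env a) (eval num env b)"
| "htsat num H T env (Eq a b) = (eval num env a = eval num env b)"
| "htsat num H T env (And F G) = (htsat num H T env F \<and> htsat num H T env G)"
| "htsat num H T env (Or F G) = (htsat num H T env F \<or> htsat num H T env G)"
| "htsat num H T env (Imp F G) = ((htsat num H T env F \<longrightarrow> htsat num H T env G)
      \<and> csat num T env (Imp F G))"
| "htsat num H T env (All (GV n) F) = (\<forall>d. htsat num H T (env(GV n := d)) F)"
| "htsat num H T env (All (IV n) F) = (\<forall>k. htsat num H T (env(IV n := num k)) F)"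
| "htsat num H T env (Ex (GV n) F) = (\<exists>d. htsat num H T (env(GV n := d)) F)"
| "htsat num H T env (Ex (IV n) F) = (\<exists>k. htsat num H T (env(IV n := num k)) F)"
| "htsat num H T env (AtLeast X V F ts) = (GAL X V F (map (eval num env) ts) \<in> H)"
| "htsat num H T env (AtMost X V F ts) = (GAM X V F (map (eval num env) ts) \<in> H)"

text \<open>For sentences the assignment is irrelevant; we use a fixed one.\<close>
definition env0 :: "(int \<Rightarrow> 'c) \<Rightarrow> var \<Rightarrow> 'c" where "env0 num = (\<lambda>_. num 0)"

definition ht_models :: "(int \<Rightarrow> 'c::linorder) \<Rightarrow> ('c,'p) gatom set \<Rightarrow> ('c,'p) gatom set
    \<Rightarrow> ('c,'p) form \<Rightarrow> bool" where
  "ht_models num H T F = htsat num H T (env0 num) F"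

section \<open>Counting formulas and the axioms Defs\<close>

fun conjl :: "('c,'p) form list \<Rightarrow> ('c,'p) form" where
  "conjl [] = Top"
| "conjl [A] = A"
| "conjl (A # B # As) = And A (conjl (B # As))"

fun disjl :: "('c,'p) form list \<Rightarrow> ('c,'p) form" where
  "disjl [] = Bot"
| "disjl [A] = A"
| "disjl (A # B # As) = Or A (disjl (B # As))"

definition exs :: "var list \<Rightarrow> ('c,'p) form \<Rightarrow> ('c,'p) form" where
  "exs vs F = foldr Ex vs F"

definition alls :: "var list \<Rightarrow> ('c,'p) form \<Rightarrow> ('c,'p) form" where
  "alls vs F = foldr All vs F"

definition ren :: "nat list \<Rightarrow> nat list \<Rightarrow> ('c,'p) form \<Rightarrow> ('c,'p) form" where
  "ren X Y F = subst (\<lambda>v. case map_of (zip (map GV X) (map (\<lambda>y. Var (GV y)) Y)) v of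
       None \<Rightarrow> Var v | Some t \<Rightarrow> t) F"

definition eqsl :: "nat list \<Rightarrow> nat list \<Rightarrow> ('c,'p) form" where
  "eqsl Y Z = conjl (map2 (\<lambda>a b. Eq (Var (GV a)) (Var (GV b))) Y Z)"

definition pairs :: "nat \<Rightarrow> (nat \<times> nat) list" where
  "pairs n = [(i,j). i \<leftarrow> [0..<n], j \<leftarrow> [Suc i..<n]]"

text \<open>exists_{>= n} X F with copies Ys = [X_1,...,X_n].\<close>
definition exge :: "nat list \<Rightarrow> ('c,'p) form \<Rightarrow> nat list list \<Rightarrow> ('c,'p) form" where
  "exge X F Ys = exs (map GV (concat Ys))
     (And (conjl (map (\<lambda>Y. ren X Y F) Ys))
          (conjl (map (\<lambda>(i,j). Neg (eqsl (Ys ! i) (Ys ! j))) (pairs (length Ys)))))"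

text \<open>exists_{<= n} X F with copies Ys = [X_1,...,X_{n+1}].\<close>
definition exle :: "nat list \<Rightarrow> ('c,'p) form \<Rightarrow> nat list list \<Rightarrow> ('c,'p) form" where
  "exle X F Ys = alls (map GV (concat Ys))
     (Imp (conjl (map (\<lambda>Y. ren X Y F) Ys))
          (disjl (map (\<lambda>(i,j). eqsl (Ys ! i) (Ys ! j)) (pairs (length Ys)))))"

definition fresh :: "nat list \<Rightarrow> nat list \<Rightarrow> ('c,'p) form \<Rightarrow> nat list list \<Rightarrow> bool" where
  "fresh X V F Ys = ((\<forall>Y\<in>set Ys. length Y = length X) \<and> distinct (concat Ys)
      \<and> GV ` set (concat Ys) \<inter> (allvars F \<union> GV ` (set X \<union> set V)) = {})"

definition atleast_ax :: "(int \<Rightarrow> 'c::linorder) \<Rightarrow> nat list \<Rightarrow> nat list \<Rightarrow> ('c,'p) form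
    \<Rightarrow> ('c,'p) form \<Rightarrow> bool" where
  "atleast_ax num X V F G = (\<exists>r. let A = AtLeast X V F (map (\<lambda>v. Var (GV v)) V @ [Cst r]) in
      (\<exists>n Ys. n > 0 \<and> r = num n \<and> fresh X V F Ys \<and> length Ys = nat n
          \<and> G = alls (map GV V) (Iff A (exge X F Ys)))
    \<or> (r \<le> num 0 \<and> G = alls (map GV V) (Iff A Top))
    \<or> ((\<forall>n. num n < r) \<and> G = alls (map GV V) (Iff A Bot)))"

definition atmost_ax :: "(int \<Rightarrow> 'c::linorder) \<Rightarrow> nat list \<Rightarrow> nat list \<Rightarrow> ('c,'p) form
    \<Rightarrow> ('c,'p) form \<Rightarrow> bool" where
  "atmost_ax num X V F G = (\<exists>r. let A = AtMost X V F (map (\<lambda>v. Var (GV v)) V @ [Cst r]) in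
      (\<exists>n Ys. n \<ge> 0 \<and> r = num n \<and> fresh X V F Ys \<and> length Ys = Suc (nat n)
          \<and> G = alls (map GV V) (Iff A (exle X F Ys)))
    \<or> (r < num 0 \<and> G = alls (map GV V) (Iff A Bot))
    \<or> ((\<forall>n. num n < r) \<and> G = alls (map GV V) (Iff A Top)))"

definition DefsAx :: "(int \<Rightarrow> 'c::linorder) \<Rightarrow> ('c,'p) form set" where
  "DefsAx num = {G. \<exists>X V F. sym_ok num X V F \<and> (atleast_ax num X V F G \<or> atmost_ax num X V F G)}"

definition StdAx :: "(int \<Rightarrow> 'c::linorder) \<Rightarrow> ('c,'p) form set" where
  "StdAx num = {F. sentence num F \<and> sigma0 F \<and> nopred F \<and> csat num {} (env0 num) F}"

definition HTAx :: "(int \<Rightarrow> 'c) \<Rightarrow> ('c,'p) form set" where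
  "HTAx num = {Or A (Or (Imp A B) (Neg B)) | A B. wf num A \<and> wf num B}"

definition SQAx :: "(int \<Rightarrow> 'c) \<Rightarrow> ('c,'p) form set" where
  "SQAx num = {Ex (GV n) (Imp A (All (GV n) A)) | n A. wf num A}"

definition Axioms :: "(int \<Rightarrow> 'c::linorder) \<Rightarrow> ('c,'p) form set" where
  "Axioms num = HTAx num \<union> SQAx num \<union> StdAx num \<union> DefsAx num"

definition standard_ht :: "(int \<Rightarrow> 'c::linorder) \<Rightarrow> ('c,'p) gatom set \<Rightarrow> ('c,'p) gatom set \<Rightarrow> bool" where
  "standard_ht num H T = (H \<subseteq> T \<and> (\<forall>D\<in>DefsAx num. ht_models num H T D))"

section \<open>The deductive system HT_#^omega\<close>

definition wfseq :: "(int \<Rightarrow> 'c) \<Rightarrow> ('c,'p) form set \<Rightarrow> ('c,'p) form \<Rightarrow> bool" where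
  "wfseq num D F = (finite D \<and> (\<forall>G\<in>D. wf num G) \<and> wf num F)"

definition fvs :: "('c,'p) form set \<Rightarrow> var set" where
  "fvs D = \<Union> (fv ` D)"

inductive deriv :: "(int \<Rightarrow> 'c::linorder) \<Rightarrow> ('c,'p) form set \<Rightarrow> ('c,'p) form set
    \<Rightarrow> ('c,'p) form \<Rightarrow> bool" for num Gam where
  assm: "\<lbrakk>F \<in> D; wfseq num D F\<rbrakk> \<Longrightarrow> deriv num Gam D F"
| axiom: "\<lbrakk>F \<in> Axioms num \<union> Gam; wfseq num D F\<rbrakk> \<Longrightarrow> deriv num Gam D F"
| weaken: "\<lbrakk>deriv num Gam D F; D \<subseteq> D'; wfseq num D' F\<rbrakk> \<Longrightarrow> deriv num Gam D' F"
| andI: "\<lbrakk>deriv num Gam D F; deriv num Gam D G; wfseq num D (And F G)\<rbrakk> \<Longrightarrow> deriv num Gam D (And F G)"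
| andE1: "\<lbrakk>deriv num Gam D (And F G); wfseq num D F\<rbrakk> \<Longrightarrow> deriv num Gam D F"
| andE2: "\<lbrakk>deriv num Gam D (And F G); wfseq num D G\<rbrakk> \<Longrightarrow> deriv num Gam D G"
| orI1: "\<lbrakk>deriv num Gam D F; wfseq num D (Or F G)\<rbrakk> \<Longrightarrow> deriv num Gam D (Or F G)"
| orI2: "\<lbrakk>deriv num Gam D G; wfseq num D (Or F G)\<rbrakk> \<Longrightarrow> deriv num Gam D (Or F G)"
| orE: "\<lbrakk>deriv num Gam D (Or F G); deriv num Gam (insert F D) H; deriv num Gam (insert G D) H;
         wfseq num D H\<rbrakk> \<Longrightarrow> deriv num Gam D H"
| impI: "\<lbrakk>deriv num Gam (insert F D) G; wfseq num D (Imp F G)\<rbrakk> \<Longrightarrow> deriv num Gam D (Imp F G)"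
| impE: "\<lbrakk>deriv num Gam D F; deriv num Gam D (Imp F G); wfseq num D G\<rbrakk> \<Longrightarrow> deriv num Gam D G"
| botE: "\<lbrakk>deriv num Gam D Bot; wfseq num D F\<rbrakk> \<Longrightarrow> deriv num Gam D F"
| allI: "\<lbrakk>deriv num Gam D F; x \<notin> fvs D; wfseq num D (All x F)\<rbrakk> \<Longrightarrow> deriv num Gam D (All x F)"
| allE: "\<lbrakk>deriv num Gam D (All x F); sort_ok num x t; sub1ok x t F; wfseq num D (sub1 x t F)\<rbrakk>
         \<Longrightarrow> deriv num Gam D (sub1 x t F)"
| exI: "\<lbrakk>deriv num Gam D (sub1 x t F); sort_ok num x t; sub1ok x t F; wfseq num D (Ex x F)\<rbrakk>
         \<Longrightarrow> deriv num Gam D (Ex x F)"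
| exE: "\<lbrakk>deriv num Gam D (Ex x F); deriv num Gam (insert F D) G; x \<notin> fvs D; x \<notin> fv G;
         wfseq num D G\<rbrakk> \<Longrightarrow> deriv num Gam D G"
| eqRefl: "wfseq num D (Eq t t) \<Longrightarrow> deriv num Gam D (Eq t t)"
| eqSubst: "\<lbrakk>deriv num Gam D (Eq t1 t2); deriv num Gam D (sub1 x t1 F); sub1ok x t1 F; sub1ok x t2 F;
         wfseq num D (sub1 x t2 F)\<rbrakk> \<Longrightarrow> deriv num Gam D (sub1 x t2 F)"
| omegaG: "\<lbrakk>\<forall>c. deriv num Gam D (sub1 (GV n) (Cst c) F); wfseq num D (All (GV n) F)\<rbrakk>
         \<Longrightarrow> deriv num Gam D (All (GV n) F)"
| omegaI: "\<lbrakk>\<forall>k. deriv num Gam D (sub1 (IV n) (Cst (num k)) F); wfseq num D (All (IV n) F)\<rbrakk>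
         \<Longrightarrow> deriv num Gam D (All (IV n) F)"

definition derivable :: "(int \<Rightarrow> 'c::linorder) \<Rightarrow> ('c,'p) form set \<Rightarrow> ('c,'p) form \<Rightarrow> bool" where
  "derivable num Gam F = deriv num Gam {} F"

end

theory Submission
  imports Defs
begin


fun fsz :: "('c,'p) form \<Rightarrow> nat" where
  "fsz (And F G) = Suc (fsz F + fsz G)"
| "fsz (Or F G) = Suc (fsz F + fsz G)"
| "fsz (Imp F G) = Suc (fsz F + fsz G)"
| "fsz (All x F) = Suc (fsz F)"
| "fsz (Ex x F) = Suc (fsz F)"
| "fsz _ = 1"

lemma fsz_subst[simp]: "fsz (subst s F) = fsz F"
  by (induction F arbitrary: s) auto

lemma fsz_sub1[simp]: "fsz (sub1 x t F) = fsz F"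
  by (simp add: sub1_def)

lemma eval_cong: "(\<forall>v\<in>fvt t. e1 v = e2 v) \<Longrightarrow> eval num e1 t = eval num e2 t"
  by (induction t) auto

lemma csat_cong: "(\<forall>v\<in>fv F. e1 v = e2 v) \<Longrightarrow> csat num T e1 F = csat num T e2 F"
proof (induction F arbitrary: e1 e2)
  case (Pred p ts)
  then have "map (eval num e1) ts = map (eval num e2) ts"
    by (auto intro!: eval_cong)
  then show ?case by (metis csat.simps htsat.simps)
next
  case (Cmp c a b)
  then have "eval num e1 a = eval num e2 a" "eval num e1 b = eval num e2 b" by (auto intro!: eval_cong)
  then show ?case by simp
next
  case (Eq a b)
  then have "eval num e1 a = eval num e2 a" "eval num e1 b = eval num e2 b" by (auto intro!: eval_cong)
  then show ?case by simp
next
  case (All x F)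
  have "\<And>d. csat num T (e1(x:=d)) F = csat num T (e2(x:=d)) F"
    by (rule All.IH) (use All.prems in auto)
  then show ?case by (cases x) auto
next
  case (Ex x F)
  have "\<And>d. csat num T (e1(x:=d)) F = csat num T (e2(x:=d)) F"
    by (rule Ex.IH) (use Ex.prems in auto)
  then show ?case by (cases x) auto
next
  case (AtLeast X V F ts)
  then have "map (eval num e1) ts = map (eval num e2) ts"
    by (auto intro!: eval_cong)
  then show ?case by (metis csat.simps htsat.simps)
next
  case (AtMost X V F ts)
  then have "map (eval num e1) ts = map (eval num e2) ts"
    by (auto intro!: eval_cong)
  then show ?case by (metis csat.simps htsat.simps)
next
  case (And F G)
  have "csat num T e1 F = csat num T e2 F" "csat num T e1 G = csat num T e2 G"
    by (rule And.IH; use And.prems in auto)+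
  then show ?case by simp
next
  case (Or F G)
  have "csat num T e1 F = csat num T e2 F" "csat num T e1 G = csat num T e2 G"
    by (rule Or.IH; use Or.prems in auto)+
  then show ?case by simp
next
  case (Imp F G)
  have "csat num T e1 F = csat num T e2 F" "csat num T e1 G = csat num T e2 G"
    by (rule Imp.IH; use Imp.prems in auto)+
  then show ?case by simp
qed auto

lemma htsat_cong: "(\<forall>v\<in>fv F. e1 v = e2 v) \<Longrightarrow> htsat num H T e1 F = htsat num H T e2 F"
proof (induction F arbitrary: e1 e2)
  case (Pred p ts)
  then have "map (eval num e1) ts = map (eval num e2) ts"
    by (auto intro!: eval_cong)
  then show ?case by (metis csat.simps htsat.simps)
next
  case (Cmp c a b)
  then have "eval num e1 a = eval num e2 a" "eval num e1 b = eval num e2 b" by (auto intro!: eval_cong)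
  then show ?case by simp
next
  case (Eq a b)
  then have "eval num e1 a = eval num e2 a" "eval num e1 b = eval num e2 b" by (auto intro!: eval_cong)
  then show ?case by simp
next
  case (Imp F G)
  have "htsat num H T e1 F = htsat num H T e2 F" using Imp.IH(1) Imp.prems by simp
  moreover have "htsat num H T e1 G = htsat num H T e2 G" using Imp.IH(2) Imp.prems by simp
  moreover have "csat num T e1 (Imp F G) = csat num T e2 (Imp F G)" using csat_cong[of "Imp F G" e1 e2 num T] Imp.prems by blast
  ultimately show ?case by simp
next
  case (All x F)
  have "\<And>d. htsat num H T (e1(x:=d)) F = htsat num H T (e2(x:=d)) F"
    by (rule All.IH) (use All.prems in auto)
  then show ?case by (cases x) auto
next
  case (Ex x F)
  have "\<And>d. htsat num H T (e1(x:=d)) F = htsat num H T (e2(x:=d)) F"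
    by (rule Ex.IH) (use Ex.prems in auto)
  then show ?case by (cases x) auto
next
  case (AtLeast X V F ts)
  then have "map (eval num e1) ts = map (eval num e2) ts"
    by (auto intro!: eval_cong)
  then show ?case by (metis csat.simps htsat.simps)
next
  case (AtMost X V F ts)
  then have "map (eval num e1) ts = map (eval num e2) ts"
    by (auto intro!: eval_cong)
  then show ?case by (metis csat.simps htsat.simps)
next
  case (And F G)
  have "htsat num H T e1 F = htsat num H T e2 F" "htsat num H T e1 G = htsat num H T e2 G"
    by (rule And.IH; use And.prems in auto)+
  then show ?case by simp
next
  case (Or F G)
  have "htsat num H T e1 F = htsat num H T e2 F" "htsat num H T e1 G = htsat num H T e2 G"
    by (rule Or.IH; use Or.prems in auto)+
  then show ?case by simp
qed auto

lemma eval_substt: "eval num env (substt s t) = eval num (\<lambda>v. eval num env (s v)) t"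
  by (induction t) auto

lemma csat_subst:
  "substok s F \<Longrightarrow> csat num T env (subst s F) = csat num T (\<lambda>v. eval num env (s v)) F"
proof (induction F arbitrary: s env)
  case (All x F)
  have *: "\<And>d. csat num T (env(x := d)) (subst (s(x := Var x)) F)
     = csat num T ((\<lambda>v. eval num env (s v))(x := d)) F"
  proof -
    fix d
    have ok: "substok (s(x := Var x)) F" using All.prems by simp
    have "csat num T (env(x := d)) (subst (s(x := Var x)) F)
       = csat num T (\<lambda>v. eval num (env(x := d)) ((s(x := Var x)) v)) F"
      by (rule All.IH[OF ok])
    also have "\<dots> = csat num T ((\<lambda>v. eval num env (s v))(x := d)) F"
    proof (intro csat_cong ballI)
      fix v assume "v \<in> fv F"
      then show "eval num (env(x := d)) ((s(x := Var x)) v) = ((\<lambda>v. eval num env (s v))(x := d)) v"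
        using All.prems by (cases "v = x") (auto intro!: eval_cong)
    qed
    finally show "csat num T (env(x := d)) (subst (s(x := Var x)) F)
     = csat num T ((\<lambda>v. eval num env (s v))(x := d)) F" .
  qed
  show ?case using * by (cases x) auto
next
  case (Ex x F)
  have *: "\<And>d. csat num T (env(x := d)) (subst (s(x := Var x)) F)
     = csat num T ((\<lambda>v. eval num env (s v))(x := d)) F"
  proof -
    fix d
    have ok: "substok (s(x := Var x)) F" using Ex.prems by simp
    have "csat num T (env(x := d)) (subst (s(x := Var x)) F)
       = csat num T (\<lambda>v. eval num (env(x := d)) ((s(x := Var x)) v)) F"
      by (rule Ex.IH[OF ok])
    also have "\<dots> = csat num T ((\<lambda>v. eval num env (s v))(x := d)) F"
    proof (intro csat_cong ballI)
      fix v assume "v \<in> fv F"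
      then show "eval num (env(x := d)) ((s(x := Var x)) v) = ((\<lambda>v. eval num env (s v))(x := d)) v"
        using Ex.prems by (cases "v = x") (auto intro!: eval_cong)
    qed
    finally show "csat num T (env(x := d)) (subst (s(x := Var x)) F)
     = csat num T ((\<lambda>v. eval num env (s v))(x := d)) F" .
  qed
  show ?case using * by (cases x) auto
qed (simp_all add: eval_substt comp_def)

lemma htsat_subst:
  "substok s F \<Longrightarrow> htsat num H T env (subst s F) = htsat num H T (\<lambda>v. eval num env (s v)) F"
proof (induction F arbitrary: s env)
  case (Imp F G)
  then show ?case using csat_subst[of s "Imp F G" num T env] by simp
next
  case (All x F)
  have *: "\<And>d. htsat num H T (env(x := d)) (subst (s(x := Var x)) F)
     = htsat num H T ((\<lambda>v. eval num env (s v))(x := d)) F"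
  proof -
    fix d
    have ok: "substok (s(x := Var x)) F" using All.prems by simp
    have "htsat num H T (env(x := d)) (subst (s(x := Var x)) F)
       = htsat num H T (\<lambda>v. eval num (env(x := d)) ((s(x := Var x)) v)) F"
      by (rule All.IH[OF ok])
    also have "\<dots> = htsat num H T ((\<lambda>v. eval num env (s v))(x := d)) F"
    proof (intro htsat_cong ballI)
      fix v assume "v \<in> fv F"
      then show "eval num (env(x := d)) ((s(x := Var x)) v) = ((\<lambda>v. eval num env (s v))(x := d)) v"
        using All.prems by (cases "v = x") (auto intro!: eval_cong)
    qed
    finally show "htsat num H T (env(x := d)) (subst (s(x := Var x)) F)
     = htsat num H T ((\<lambda>v. eval num env (s v))(x := d)) F" .
  qed
  show ?case using * by (cases x) auto
next
  case (Ex x F)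
  have *: "\<And>d. htsat num H T (env(x := d)) (subst (s(x := Var x)) F)
     = htsat num H T ((\<lambda>v. eval num env (s v))(x := d)) F"
  proof -
    fix d
    have ok: "substok (s(x := Var x)) F" using Ex.prems by simp
    have "htsat num H T (env(x := d)) (subst (s(x := Var x)) F)
       = htsat num H T (\<lambda>v. eval num (env(x := d)) ((s(x := Var x)) v)) F"
      by (rule Ex.IH[OF ok])
    also have "\<dots> = htsat num H T ((\<lambda>v. eval num env (s v))(x := d)) F"
    proof (intro htsat_cong ballI)
      fix v assume "v \<in> fv F"
      then show "eval num (env(x := d)) ((s(x := Var x)) v) = ((\<lambda>v. eval num env (s v))(x := d)) v"
        using Ex.prems by (cases "v = x") (auto intro!: eval_cong)
    qed
    finally show "htsat num H T (env(x := d)) (subst (s(x := Var x)) F)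
     = htsat num H T ((\<lambda>v. eval num env (s v))(x := d)) F" .
  qed
  show ?case using * by (cases x) auto
qed (simp_all add: eval_substt comp_def)

lemma sub1_env: "(\<lambda>v. eval num env (((\<lambda>v. Var v)(x := t)) v)) = env(x := eval num env t)"
  by auto

lemma csat_sub1: "sub1ok x t F \<Longrightarrow> csat num T env (sub1 x t F) = csat num T (env(x := eval num env t)) F"
  unfolding sub1_def sub1ok_def by (subst csat_subst) (auto intro!: csat_cong)

lemma htsat_sub1: "sub1ok x t F \<Longrightarrow> htsat num H T env (sub1 x t F) = htsat num H T (env(x := eval num env t)) F"
  unfolding sub1_def sub1ok_def by (subst htsat_subst) (auto intro!: htsat_cong)

lemma substok_triv: "(\<forall>v. fvt (s v) \<subseteq> {v}) \<Longrightarrow> substok s F"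
proof (induction F arbitrary: s)
  case (All x F)
  have "\<forall>v. fvt ((s(x := Var x)) v) \<subseteq> {v}" using All.prems by auto
  then show ?case using All by auto
next
  case (Ex x F)
  have "\<forall>v. fvt ((s(x := Var x)) v) \<subseteq> {v}" using Ex.prems by auto
  then show ?case using Ex by auto
qed auto

lemma sub1ok_Cst[simp]: "sub1ok x (Cst c) F"
  unfolding sub1ok_def by (rule substok_triv) auto

lemma sub1ok_Var[simp]: "sub1ok x (Var x) F"
  unfolding sub1ok_def by (rule substok_triv) auto

lemma substt_id: "(\<forall>v\<in>fvt t. s v = Var v) \<Longrightarrow> substt s t = t"
  by (induction t) auto

lemma subst_id: "(\<forall>v\<in>fv F. s v = Var v) \<Longrightarrow> subst s F = F"
proof (induction F arbitrary: s)
  case (Pred p ts) then show ?case by (auto intro!: map_idI substt_id)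
next
  case (AtLeast X V F ts) then show ?case by (auto intro!: map_idI substt_id)
next
  case (AtMost X V F ts) then show ?case by (auto intro!: map_idI substt_id)
qed (auto simp: substt_id)

lemma sub1_Var[simp]: "sub1 x (Var x) F = F"
  unfolding sub1_def by (rule subst_id) auto

lemma sub1_closed: "x \<notin> fv F \<Longrightarrow> sub1 x t F = F"
  unfolding sub1_def by (rule subst_id) auto

lemma fvt_substt: "fvt (substt s t) = (\<Union>v\<in>fvt t. fvt (s v))"
  by (induction t) auto

lemma fv_subst: "fv (subst s F) \<subseteq> (\<Union>v\<in>fv F. fvt (s v))"
proof (induction F arbitrary: s)
  case (All x F)
  have *: "fv (subst (s(x := Var x)) F) \<subseteq> (\<Union>v\<in>fv F. fvt ((s(x := Var x)) v))" by (rule All)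
  show ?case
  proof
    fix y assume "y \<in> fv (subst s (All x F))"
    then have y: "y \<in> fv (subst (s(x:=Var x)) F)" "y \<noteq> x" by auto
    then obtain v where "v\<in>fv F" "y \<in> fvt ((s(x:=Var x)) v)" using * by blast
    then show "y \<in> (\<Union>v\<in>fv (All x F). fvt (s v))" using y by (cases "v = x") auto
  qed
next
  case (Ex x F)
  have *: "fv (subst (s(x := Var x)) F) \<subseteq> (\<Union>v\<in>fv F. fvt ((s(x := Var x)) v))" by (rule Ex)
  show ?case
  proof
    fix y assume "y \<in> fv (subst s (Ex x F))"
    then have y: "y \<in> fv (subst (s(x:=Var x)) F)" "y \<noteq> x" by auto
    then obtain v where "v\<in>fv F" "y \<in> fvt ((s(x:=Var x)) v)" using * by blast
    then show "y \<in> (\<Union>v\<in>fv (Ex x F). fvt (s v))" using y by (cases "v = x") auto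
  qed
next
  case (And F G)
  have "fv (subst s F) \<subseteq> (\<Union>v\<in>fv F. fvt (s v))" "fv (subst s G) \<subseteq> (\<Union>v\<in>fv G. fvt (s v))"
    by (rule And.IH)+
  then show ?case by auto
next
  case (Or F G)
  have "fv (subst s F) \<subseteq> (\<Union>v\<in>fv F. fvt (s v))" "fv (subst s G) \<subseteq> (\<Union>v\<in>fv G. fvt (s v))"
    by (rule Or.IH)+
  then show ?case by auto
next
  case (Imp F G)
  have "fv (subst s F) \<subseteq> (\<Union>v\<in>fv F. fvt (s v))" "fv (subst s G) \<subseteq> (\<Union>v\<in>fv G. fvt (s v))"
    by (rule Imp.IH)+
  then show ?case by auto
qed (auto simp: fvt_substt)

lemma fv_sub1_Cst: "fv (sub1 x (Cst c) F) \<subseteq> fv F - {x}"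
  using fv_subst[of "(\<lambda>v. Var v)(x := Cst c)" F] unfolding sub1_def
  by (auto split: if_splits)




lemma is_int_substt: "(\<forall>v. is_int num (Var v) \<longrightarrow> is_int num (s v)) \<Longrightarrow> is_int num t \<Longrightarrow> is_int num (substt s t)"
  by (induction t) auto

lemma wf_trm_substt: "(\<forall>v. wf_trm num (s v) \<and> (is_int num (Var v) \<longrightarrow> is_int num (s v))) \<Longrightarrow> wf_trm num t \<Longrightarrow> wf_trm num (substt s t)"
  by (induction t) (auto intro: is_int_substt)

lemma wf_subst: "(\<forall>v. wf_trm num (s v) \<and> (is_int num (Var v) \<longrightarrow> is_int num (s v))) \<Longrightarrow> wf num F \<Longrightarrow> wf num (subst s F)"
proof (induction F arbitrary: s)
  case (Pred p ts) then show ?case by (auto simp: list_all_iff intro: wf_trm_substt)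
next
  case (Cmp c a b) then show ?case by (auto intro: wf_trm_substt)
next
  case (Eq a b) then show ?case by (auto intro: wf_trm_substt)
next
  case (All x F)
  have "\<forall>v. wf_trm num ((s(x:=Var x)) v) \<and> (is_int num (Var v) \<longrightarrow> is_int num ((s(x:=Var x)) v))"
    using All.prems by auto
  then show ?case using All by auto
next
  case (Ex x F)
  have "\<forall>v. wf_trm num ((s(x:=Var x)) v) \<and> (is_int num (Var v) \<longrightarrow> is_int num ((s(x:=Var x)) v))"
    using Ex.prems by auto
  then show ?case using Ex by auto
next
  case (AtLeast X V F ts) then show ?case by (auto simp: list_all_iff intro: wf_trm_substt)
next
  case (AtMost X V F ts) then show ?case by (auto simp: list_all_iff intro: wf_trm_substt)
qed auto

lemma is_int_wf_trm: "is_int num t \<Longrightarrow> wf_trm num t"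
  by (induction t rule: is_int.induct) auto

lemma sort_ok_props: "sort_ok num x t \<Longrightarrow> wf_trm num t \<and> (is_int num (Var x) \<longrightarrow> is_int num t)"
  by (cases x) (auto intro: is_int_wf_trm)

lemma wf_sub1: "sort_ok num x t \<Longrightarrow> wf num F \<Longrightarrow> wf num (sub1 x t F)"
  unfolding sub1_def
proof (rule wf_subst)
  assume "sort_ok num x t"
  then show "\<forall>v. wf_trm num (((\<lambda>v. Var v)(x := t)) v) \<and> (is_int num (Var v) \<longrightarrow> is_int num (((\<lambda>v. Var v)(x := t)) v))"
    using sort_ok_props[of num x t] by auto
qed

lemma sort_ok_GV[simp]: "sort_ok num (GV n) (Cst c)" by simp
lemma sort_ok_IV[simp]: "sort_ok num (IV n) (Cst (num k))" by simp

lemma sentence_sub1: "sort_ok num x (Cst c) \<Longrightarrow> wf num F \<Longrightarrow> fv F \<subseteq> {x} \<Longrightarrow> sentence num (sub1 x (Cst c) F)"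
  unfolding sentence_def using wf_sub1[of num x "Cst c" F] fv_sub1_Cst[of x c F] by auto

lemma sub1_Neg[simp]: "sub1 x t (Neg F) = Neg (sub1 x t F)"
  by (simp add: sub1_def Neg_def)
lemma sub1_simps[simp]:
  "sub1 x t (And F G) = And (sub1 x t F) (sub1 x t G)"
  "sub1 x t (Or F G) = Or (sub1 x t F) (sub1 x t G)"
  "sub1 x t (Imp F G) = Imp (sub1 x t F) (sub1 x t G)"
  "sub1 x t Bot = Bot"
  by (simp_all add: sub1_def)

lemma fv_Neg[simp]: "fv (Neg F) = fv F" by (simp add: Neg_def)
lemma wf_Neg[simp]: "wf num (Neg F) = wf num F" by (simp add: Neg_def)

locale L =
  fixes num :: "int \<Rightarrow> 'c::{linorder,countable}" and Gam :: "('c,'p::countable) form set"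
  assumes num_mono: "strict_mono num"
    and num_contiguous: "\<forall>x m n. num m \<le> x \<longrightarrow> x \<le> num n \<longrightarrow> x \<in> range num"
    and Gam_sentences: "\<forall>G\<in>Gam. sentence num G"
begin

abbreviation prv where "prv D F \<equiv> deriv num Gam D F"

definition wfs :: "('c,'p) form set \<Rightarrow> bool" where
  "wfs D = (finite D \<and> (\<forall>G\<in>D. wf num G))"

lemma prv_wf: "prv D F \<Longrightarrow> wfs D \<and> wf num F"
  by (induction rule: deriv.induct) (auto simp: wfseq_def wfs_def)

lemma wfseqI: "wfs D \<Longrightarrow> wf num F \<Longrightarrow> wfseq num D F"
  by (simp add: wfseq_def wfs_def)

lemma wfs_insert: "wfs (insert F D) = (wf num F \<and> wfs D)"
  by (auto simp: wfs_def)

lemma P_assm: "F \<in> D \<Longrightarrow> wfs D \<Longrightarrow> prv D F"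
  by (rule deriv.assm) (auto simp: wfseq_def wfs_def)

lemma P_ax: "F \<in> Axioms num \<union> Gam \<Longrightarrow> wf num F \<Longrightarrow> wfs D \<Longrightarrow> prv D F"
  by (rule deriv.axiom) (auto simp: wfseqI)

lemma P_weak: "prv D F \<Longrightarrow> D \<subseteq> D' \<Longrightarrow> wfs D' \<Longrightarrow> prv D' F"
  by (rule deriv.weaken) (auto dest: prv_wf simp: wfseqI)

lemma P_andI: "prv D F \<Longrightarrow> prv D G \<Longrightarrow> prv D (And F G)"
  by (rule deriv.andI) (auto dest!: prv_wf simp: wfseqI)

lemma P_andE1: "prv D (And F G) \<Longrightarrow> prv D F"
  by (rule deriv.andE1) (auto dest!: prv_wf simp: wfseqI)

lemma P_andE2: "prv D (And F G) \<Longrightarrow> prv D G"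
  by (rule deriv.andE2) (auto dest!: prv_wf simp: wfseqI)

lemma P_orI1: "prv D F \<Longrightarrow> wf num G \<Longrightarrow> prv D (Or F G)"
  by (rule deriv.orI1) (auto dest!: prv_wf simp: wfseqI)

lemma P_orI2: "prv D G \<Longrightarrow> wf num F \<Longrightarrow> prv D (Or F G)"
  by (rule deriv.orI2) (auto dest!: prv_wf simp: wfseqI)

lemma P_orE: assumes "prv D (Or F G)" "prv (insert F D) H" "prv (insert G D) H" shows "prv D H"
proof (rule deriv.orE[OF assms])
  show "wfseq num D H" using prv_wf[OF assms(1)] prv_wf[OF assms(2)] by (simp add: wfseqI)
qed

lemma P_impI: "prv (insert F D) G \<Longrightarrow> prv D (Imp F G)"
  by (rule deriv.impI) (auto dest!: prv_wf simp: wfseqI wfs_insert)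

lemma P_impE: assumes "prv D (Imp F G)" "prv D F" shows "prv D G"
proof (rule deriv.impE[OF assms(2,1)])
  show "wfseq num D G" using prv_wf[OF assms(1)] by (simp add: wfseqI)
qed

lemma P_botE: "prv D Bot \<Longrightarrow> wf num F \<Longrightarrow> prv D F"
  by (rule deriv.botE) (auto dest!: prv_wf simp: wfseqI)

lemma P_negI: "prv (insert F D) Bot \<Longrightarrow> prv D (Neg F)"
  unfolding Neg_def by (rule P_impI)

lemma P_negE: "prv D (Neg F) \<Longrightarrow> prv D F \<Longrightarrow> prv D Bot"
  unfolding Neg_def by (rule P_impE)

lemma P_allE: "prv D (All x F) \<Longrightarrow> sort_ok num x (Cst c) \<Longrightarrow> prv D (sub1 x (Cst c) F)"
  by (rule deriv.allE) (auto dest!: prv_wf simp: wfseqI wf_sub1)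

lemma P_allE_Var: "prv D (All x F) \<Longrightarrow> prv D F"
  using deriv.allE[of num Gam D x F "Var x"]
  by (cases x) (auto dest!: prv_wf simp: wfseqI)

lemma P_exI: "prv D (sub1 x (Cst c) F) \<Longrightarrow> sort_ok num x (Cst c) \<Longrightarrow> wf num F \<Longrightarrow> prv D (Ex x F)"
  by (rule deriv.exI) (auto dest!: prv_wf simp: wfseqI)

lemma P_exE: assumes "prv D (Ex x F)" "prv (insert F D) G" "x \<notin> fvs D" "x \<notin> fv G" shows "prv D G"
proof (rule deriv.exE[OF assms])
  show "wfseq num D G" using prv_wf[OF assms(1)] prv_wf[OF assms(2)] by (simp add: wfseqI)
qed

lemma P_omegaG: "(\<And>c. prv D (sub1 (GV n) (Cst c) F)) \<Longrightarrow> wf num F \<Longrightarrow> wfs D \<Longrightarrow> prv D (All (GV n) F)"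
  by (rule deriv.omegaG) (auto simp: wfseqI)

lemma P_omegaI: "(\<And>k. prv D (sub1 (IV n) (Cst (num k)) F)) \<Longrightarrow> wf num F \<Longrightarrow> wfs D \<Longrightarrow> prv D (All (IV n) F)"
  by (rule deriv.omegaI) (auto simp: wfseqI)

lemma P_eqRefl: "wfs D \<Longrightarrow> wf_trm num t \<Longrightarrow> prv D (Eq t t)"
  by (rule deriv.eqRefl) (auto simp: wfseqI)

lemma P_omega: "(\<And>c. sort_ok num x (Cst c) \<Longrightarrow> prv D (sub1 x (Cst c) F)) \<Longrightarrow> wf num F \<Longrightarrow> wfs D \<Longrightarrow> prv D (All x F)"
  by (cases x) (auto intro!: P_omegaG P_omegaI)

end



lemma fv_alls: "fv (alls vs B) = fv B - set vs"
  by (induction vs) (auto simp: alls_def)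
lemma wf_alls: "wf num (alls vs B) = wf num B"
  by (induction vs) (auto simp: alls_def)
lemma fv_exs: "fv (exs vs B) = fv B - set vs"
  by (induction vs) (auto simp: exs_def)
lemma wf_exs: "wf num (exs vs B) = wf num B"
  by (induction vs) (auto simp: exs_def)

lemma fv_conjl: "fv (conjl Bs) \<subseteq> (\<Union>B\<in>set Bs. fv B)"
  by (induction Bs rule: conjl.induct) (auto simp: Top_def Neg_def)
lemma wf_conjl: "\<forall>B\<in>set Bs. wf num B \<Longrightarrow> wf num (conjl Bs)"
  by (induction Bs rule: conjl.induct) (auto simp: Top_def Neg_def)
lemma fv_disjl: "fv (disjl Bs) \<subseteq> (\<Union>B\<in>set Bs. fv B)"
  by (induction Bs rule: disjl.induct) auto
lemma wf_disjl: "\<forall>B\<in>set Bs. wf num B \<Longrightarrow> wf num (disjl Bs)"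
  by (induction Bs rule: disjl.induct) auto

lemma fv_Iff: "fv (Iff A B) = fv A \<union> fv B" by (auto simp: Iff_def)
lemma wf_Iff: "wf num (Iff A B) = (wf num A \<and> wf num B)" by (auto simp: Iff_def)
lemma fv_Top[simp]: "fv Top = {}" by (simp add: Top_def Neg_def)
lemma wf_Top[simp]: "wf num Top" by (simp add: Top_def Neg_def)

lemma fv_eqsl: "fv (eqsl Y Z :: ('c,'p) form) \<subseteq> GV ` (set Y \<union> set Z)"
proof -
  have "fv (eqsl Y Z :: ('c,'p) form) \<subseteq> (\<Union>B\<in>set (map2 (\<lambda>a b. Eq (Var (GV a)) (Var (GV b)) :: ('c,'p) form) Y Z). fv B)"
    unfolding eqsl_def by (rule fv_conjl)
  also have "\<dots> \<subseteq> GV ` (set Y \<union> set Z)"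
    by (force dest: set_zip_leftD set_zip_rightD)
  finally show ?thesis .
qed

lemma wf_eqsl: "wf num (eqsl Y Z)"
  unfolding eqsl_def by (rule wf_conjl) auto

lemma pairs_lt: "(i, j) \<in> set (pairs n) \<Longrightarrow> i < n \<and> j < n"
  by (auto simp: pairs_def)

definition rens :: "nat list \<Rightarrow> nat list \<Rightarrow> var \<Rightarrow> 'c trm" where
  "rens X Y = (\<lambda>v. case map_of (zip (map GV X) (map (\<lambda>y. Var (GV y)) Y)) v of
       None \<Rightarrow> Var v | Some t \<Rightarrow> t)"

lemma ren_rens: "ren X Y F = subst (rens X Y) F" by (simp add: ren_def rens_def)

lemma rens_cases: "(rens X Y v :: 'c trm) = Var v \<or> (\<exists>y\<in>set Y. (rens X Y v :: 'c trm) = Var (GV y))"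
proof (cases "map_of (zip (map GV X) (map (\<lambda>y. Var (GV y) :: 'c trm) Y)) v")
  case (Some t)
  then have "(v, t) \<in> set (zip (map GV X) (map (\<lambda>y. Var (GV y) :: 'c trm) Y))" by (rule map_of_SomeD)
  then have "t \<in> set (map (\<lambda>y. Var (GV y) :: 'c trm) Y)" by (rule set_zip_rightD)
  then show ?thesis using Some by (auto simp: rens_def)
qed (simp add: rens_def)

lemma rens_IV: "(rens X Y (IV n) :: 'c trm) = Var (IV n)"
proof (cases "map_of (zip (map GV X) (map (\<lambda>y. Var (GV y) :: 'c trm) Y)) (IV n)")
  case (Some t)
  then have "(IV n, t) \<in> set (zip (map GV X) (map (\<lambda>y. Var (GV y) :: 'c trm) Y))" by (rule map_of_SomeD)
  then have "IV n \<in> set (map GV X)" by (rule set_zip_leftD)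
  then show ?thesis by auto
qed (simp add: rens_def)

lemma rens_X: "length Y = length X \<Longrightarrow> x \<in> set X \<Longrightarrow> \<exists>y\<in>set Y. (rens X Y (GV x) :: 'c trm) = Var (GV y)"
proof -
  assume l: "length Y = length X" and x: "x \<in> set X"
  have "map_of (zip (map GV X) (map (\<lambda>y. Var (GV y) :: 'c trm) Y)) (GV x) \<noteq> None"
    using l x by simp
  then obtain t where t: "map_of (zip (map GV X) (map (\<lambda>y. Var (GV y) :: 'c trm) Y)) (GV x) = Some t" by auto
  then have "(GV x, t) \<in> set (zip (map GV X) (map (\<lambda>y. Var (GV y)) Y))" by (rule map_of_SomeD)
  then have "t \<in> set (map (\<lambda>y. Var (GV y)) Y)" by (rule set_zip_rightD)
  then show ?thesis using t by (auto simp: rens_def)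
qed

lemma wf_ren: fixes num :: "int \<Rightarrow> 'c" and F :: "('c,'p) form"
  shows "wf num F \<Longrightarrow> wf num (ren X Y F)"
  unfolding ren_rens
proof (rule wf_subst)
  show "\<forall>v. wf_trm num (rens X Y v) \<and> (is_int num (Var v) \<longrightarrow> is_int num (rens X Y v))"
  proof
    fix v
    show "wf_trm num (rens X Y v) \<and> (is_int num (Var v) \<longrightarrow> is_int num (rens X Y v))"
      using rens_cases[of X Y v, where 'c='c] by (cases v) (auto simp: rens_IV)
  qed
qed

lemma fv_ren: fixes F :: "('c,'p) form"
  assumes l: "length Y = length X" and f: "fv F \<subseteq> GV ` (set X \<union> set V)"
  shows "fv (ren X Y F) \<subseteq> GV ` (set Y \<union> set V)"
proof -
  have "fv (ren X Y F) \<subseteq> (\<Union>v\<in>fv F. fvt (rens X Y v :: 'c trm))" unfolding ren_rens by (rule fv_subst)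
  also have "\<dots> \<subseteq> GV ` (set Y \<union> set V)"
  proof
    fix w assume "w \<in> (\<Union>v\<in>fv F. fvt (rens X Y v :: 'c trm))"
    then obtain v where v: "v \<in> fv F" "w \<in> fvt (rens X Y v :: 'c trm)" by blast
    then obtain z where z: "v = GV z" "z \<in> set X \<union> set V" using f by auto
    show "w \<in> GV ` (set Y \<union> set V)"
    proof (cases "z \<in> set X")
      case True
      then obtain y where "y \<in> set Y" "(rens X Y (GV z) :: 'c trm) = Var (GV y)" using rens_X[OF l] by blast
      then show ?thesis using v z by auto
    next
      case False
      then have "z \<in> set V" using z by auto
      then show ?thesis using rens_cases[of X Y v, where 'c='c] v z by auto
    qed
  qed
  finally show ?thesis .
qed

lemma exge_props: fixes F :: "('c,'p) form"
  assumes fr: "fresh X V F Ys" and s: "sym_ok num X V F"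
  shows "wf num (exge X F Ys) \<and> fv (exge X F Ys) \<subseteq> GV ` set V"
proof -
  have l: "\<forall>Y\<in>set Ys. length Y = length X" using fr by (simp add: fresh_def)
  have wF: "wf num F" and fF: "fv F \<subseteq> GV ` (set X \<union> set V)" using s by (auto simp: sym_ok_def)
  let ?B1 = "conjl (map (\<lambda>Y. ren X Y F) Ys)"
  let ?B2 = "conjl (map (\<lambda>(i,j). Neg (eqsl (Ys ! i) (Ys ! j) :: ('c,'p) form)) (pairs (length Ys)))"
  have w: "wf num ?B1" "wf num ?B2"
    by (auto intro!: wf_conjl wf_ren wF simp: wf_eqsl)
  have f1: "fv ?B1 \<subseteq> GV ` (set (concat Ys) \<union> set V)"
  proof -
    have "fv ?B1 \<subseteq> (\<Union>B\<in>set (map (\<lambda>Y. ren X Y F) Ys). fv B)" by (rule fv_conjl)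
    also have "\<dots> \<subseteq> GV ` (set (concat Ys) \<union> set V)"
    proof
      fix w assume "w \<in> (\<Union>B\<in>set (map (\<lambda>Y. ren X Y F) Ys). fv B)"
      then obtain Y where Y: "Y \<in> set Ys" "w \<in> fv (ren X Y F)" by auto
      then have "w \<in> GV ` (set Y \<union> set V)" using fv_ren[OF _ fF] l by blast
      then show "w \<in> GV ` (set (concat Ys) \<union> set V)" using Y by auto
    qed
    finally show ?thesis .
  qed
  have f2: "fv ?B2 \<subseteq> GV ` set (concat Ys)"
  proof -
    have "fv ?B2 \<subseteq> (\<Union>B\<in>set (map (\<lambda>(i,j). Neg (eqsl (Ys ! i) (Ys ! j) :: ('c,'p) form)) (pairs (length Ys))). fv B)"
      by (rule fv_conjl)
    also have "\<dots> \<subseteq> GV ` set (concat Ys)"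
    proof
      fix w assume "w \<in> (\<Union>B\<in>set (map (\<lambda>(i,j). Neg (eqsl (Ys ! i) (Ys ! j) :: ('c,'p) form)) (pairs (length Ys))). fv B)"
      then obtain i j where ij: "(i,j) \<in> set (pairs (length Ys))" "w \<in> fv (eqsl (Ys ! i) (Ys ! j) :: ('c,'p) form)" by auto
      have "Ys ! i \<in> set Ys" "Ys ! j \<in> set Ys" using pairs_lt[OF ij(1)] by auto
      moreover obtain z where "w = GV z" "z \<in> set (Ys ! i) \<union> set (Ys ! j)"
        using fv_eqsl[of "Ys ! i" "Ys ! j", where 'c='c and 'p='p] ij(2) by blast
      ultimately show "w \<in> GV ` set (concat Ys)" by auto
    qed
    finally show ?thesis .
  qed
  have "fv ?B1 \<union> fv ?B2 - GV ` set (concat Ys) \<subseteq> GV ` set V" using f1 f2 by blast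
  then show ?thesis using w by (simp add: exge_def wf_exs fv_exs)
qed

lemma exle_props: fixes F :: "('c,'p) form"
  assumes fr: "fresh X V F Ys" and s: "sym_ok num X V F"
  shows "wf num (exle X F Ys) \<and> fv (exle X F Ys) \<subseteq> GV ` set V"
proof -
  have l: "\<forall>Y\<in>set Ys. length Y = length X" using fr by (simp add: fresh_def)
  have wF: "wf num F" and fF: "fv F \<subseteq> GV ` (set X \<union> set V)" using s by (auto simp: sym_ok_def)
  let ?B1 = "conjl (map (\<lambda>Y. ren X Y F) Ys)"
  let ?B2 = "disjl (map (\<lambda>(i,j). eqsl (Ys ! i) (Ys ! j) :: ('c,'p) form) (pairs (length Ys)))"
  have w: "wf num ?B1" "wf num ?B2"
    by (auto intro!: wf_conjl wf_disjl wf_ren wF simp: wf_eqsl)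
  have f1: "fv ?B1 \<subseteq> GV ` (set (concat Ys) \<union> set V)"
  proof -
    have "fv ?B1 \<subseteq> (\<Union>B\<in>set (map (\<lambda>Y. ren X Y F) Ys). fv B)" by (rule fv_conjl)
    also have "\<dots> \<subseteq> GV ` (set (concat Ys) \<union> set V)"
    proof
      fix w assume "w \<in> (\<Union>B\<in>set (map (\<lambda>Y. ren X Y F) Ys). fv B)"
      then obtain Y where Y: "Y \<in> set Ys" "w \<in> fv (ren X Y F)" by auto
      then have "w \<in> GV ` (set Y \<union> set V)" using fv_ren[OF _ fF] l by blast
      then show "w \<in> GV ` (set (concat Ys) \<union> set V)" using Y by auto
    qed
    finally show ?thesis .
  qed
  have f2: "fv ?B2 \<subseteq> GV ` set (concat Ys)"
  proof -
    have "fv ?B2 \<subseteq> (\<Union>B\<in>set (map (\<lambda>(i,j). eqsl (Ys ! i) (Ys ! j) :: ('c,'p) form) (pairs (length Ys))). fv B)"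
      by (rule fv_disjl)
    also have "\<dots> \<subseteq> GV ` set (concat Ys)"
    proof
      fix w assume "w \<in> (\<Union>B\<in>set (map (\<lambda>(i,j). eqsl (Ys ! i) (Ys ! j) :: ('c,'p) form) (pairs (length Ys))). fv B)"
      then obtain i j where ij: "(i,j) \<in> set (pairs (length Ys))" "w \<in> fv (eqsl (Ys ! i) (Ys ! j) :: ('c,'p) form)" by auto
      have "Ys ! i \<in> set Ys" "Ys ! j \<in> set Ys" using pairs_lt[OF ij(1)] by auto
      moreover obtain z where "w = GV z" "z \<in> set (Ys ! i) \<union> set (Ys ! j)"
        using fv_eqsl[of "Ys ! i" "Ys ! j", where 'c='c and 'p='p] ij(2) by blast
      ultimately show "w \<in> GV ` set (concat Ys)" by auto
    qed
    finally show ?thesis .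
  qed
  have "fv ?B1 \<union> fv ?B2 - GV ` set (concat Ys) \<subseteq> GV ` set V" using f1 f2 by blast
  then show ?thesis using w by (simp add: exle_def wf_alls fv_alls)
qed

lemma atom_props:
  assumes s: "sym_ok num X V F"
  shows "wf num (AtLeast X V F (map (\<lambda>v. Var (GV v)) V @ [Cst r])) \<and> fv (AtLeast X V F (map (\<lambda>v. Var (GV v)) V @ [Cst r])) = GV ` set V"
    "wf num (AtMost X V F (map (\<lambda>v. Var (GV v)) V @ [Cst r])) \<and> fv (AtMost X V F (map (\<lambda>v. Var (GV v)) V @ [Cst r])) = GV ` set V"
  using s by (auto simp: sym_ok_def list_all_iff)

lemma DefsAx_sentence: fixes num :: "int \<Rightarrow> 'c::linorder" and G :: "('c,'p) form"
  shows "G \<in> DefsAx num \<Longrightarrow> sentence num G"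
proof -
  assume "G \<in> DefsAx num"
  then obtain X V F where s: "sym_ok num X V F" and ax: "atleast_ax num X V F G \<or> atmost_ax num X V F G"
    by (auto simp: DefsAx_def)
  have fin: "sentence num (alls (map GV V) (Iff A B))"
    if "wf num A" "wf num B" "fv A \<subseteq> GV ` set V" "fv B \<subseteq> GV ` set V" for A B :: "('c,'p) form"
    using that by (auto simp: sentence_def wf_alls fv_alls wf_Iff fv_Iff)
  from ax show ?thesis
  proof
    assume "atleast_ax num X V F G"
    then show ?thesis unfolding atleast_ax_def Let_def
      using fin atom_props(1)[OF s] exge_props[OF _ s] by (auto simp: Neg_def) 
  next
    assume "atmost_ax num X V F G"
    then show ?thesis unfolding atmost_ax_def Let_def
      using fin atom_props(2)[OF s] exle_props[OF _ s] by (auto simp: Neg_def)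
  qed
qed




lemma persist: "H \<subseteq> T \<Longrightarrow> htsat num H T env G \<Longrightarrow> csat num T env G"
proof (induction G arbitrary: env)
  case (All x G) then show ?case by (cases x) auto
next
  case (Ex x G) then show ?case by (cases x) auto
qed auto

lemma htsat_TT: "htsat num T T env G = csat num T env G"
proof (induction G arbitrary: env)
  case (All x G) then show ?case by (cases x) (simp_all only: htsat.simps csat.simps All.IH)
next
  case (Ex x G) then show ?case by (cases x) (simp_all only: htsat.simps csat.simps Ex.IH)
qed auto

lemma std_nopred: "nopred G \<Longrightarrow> sigma0 G \<Longrightarrow> htsat num H T env G = csat num T env G"
proof (induction G arbitrary: env)
  case (All x G) then show ?case by (cases x) auto
next
  case (Ex x G) then show ?case by (cases x) auto
qed auto

lemma csat_indep: "nopred G \<Longrightarrow> sigma0 G \<Longrightarrow> csat num T env G = csat num T' env G"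
proof (induction G arbitrary: env)
  case (All x G) then show ?case by (cases x) auto
next
  case (Ex x G) then show ?case by (cases x) auto
qed auto

lemma sentence_env: "sentence num G \<Longrightarrow> htsat num H T env G = htsat num H T (env0 num) G"
  by (rule htsat_cong) (simp add: sentence_def)

lemma sentence_env_c: "sentence num G \<Longrightarrow> csat num T env G = csat num T (env0 num) G"
  by (rule csat_cong) (simp add: sentence_def)

context L begin

definition envok :: "(var \<Rightarrow> 'c) \<Rightarrow> bool" where "envok env = (\<forall>n. env (IV n) \<in> range num)"

lemma eval_int: "envok env \<Longrightarrow> is_int num t \<Longrightarrow> eval num env t \<in> range num"
proof (induction t)
  case (Var v) then show ?case by (cases v) (auto simp: envok_def)
qed auto

lemma envok_upd: "envok env \<Longrightarrow> sort_ok num x t \<Longrightarrow> envok (env(x := eval num env t))"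
  using eval_int[of env t] by (cases x) (auto simp: envok_def)

lemma envok_GV: "envok env \<Longrightarrow> envok (env(GV n := d))" by (auto simp: envok_def)
lemma envok_IV: "envok env \<Longrightarrow> envok (env(IV n := num k))" by (auto simp: envok_def)
lemma envok_env0: "envok (env0 num)" by (auto simp: envok_def env0_def)

definition svalid :: "('c,'p) form set \<Rightarrow> ('c,'p) form \<Rightarrow> bool" where
  "svalid D F = (\<forall>H T env. standard_ht num H T \<longrightarrow> (\<forall>G\<in>Gam. ht_models num H T G) \<longrightarrow> envok env
     \<longrightarrow> (\<forall>G\<in>D. htsat num H T env G) \<longrightarrow> htsat num H T env F)"

lemma svalidI: "(\<And>H T env. standard_ht num H T \<Longrightarrow> (\<forall>G\<in>Gam. ht_models num H T G) \<Longrightarrow> envok env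
     \<Longrightarrow> (\<forall>G\<in>D. htsat num H T env G) \<Longrightarrow> htsat num H T env F) \<Longrightarrow> svalid D F"
  by (auto simp: svalid_def)

lemma svalidD: "svalid D F \<Longrightarrow> standard_ht num H T \<Longrightarrow> (\<forall>G\<in>Gam. ht_models num H T G) \<Longrightarrow> envok env
     \<Longrightarrow> (\<forall>G\<in>D. htsat num H T env G) \<Longrightarrow> htsat num H T env F"
  by (auto simp: svalid_def)

lemma standard_TT: assumes s: "standard_ht num H T" and g: "\<forall>G\<in>Gam. ht_models num H T G"
  shows "standard_ht num T T" "\<forall>G\<in>Gam. ht_models num T T G"
proof -
  have HT: "H \<subseteq> T" using s by (simp add: standard_ht_def)
  show "standard_ht num T T" using s persist[OF HT] by (auto simp: standard_ht_def ht_models_def htsat_TT)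
  show "\<forall>G\<in>Gam. ht_models num T T G" using g persist[OF HT] by (auto simp: ht_models_def htsat_TT)
qed

lemma ax_valid:
  assumes F: "F \<in> Axioms num \<union> Gam" and s: "standard_ht num H T" and g: "\<forall>G\<in>Gam. ht_models num H T G"
  shows "htsat num H T env F"
proof -
  have HT: "H \<subseteq> T" using s by (simp add: standard_ht_def)
  have nb: "htsat num H T env (Neg B) \<longleftrightarrow> \<not> csat num T env B" for B env
    using persist[OF HT, of num env B] by (auto simp: Neg_def)
  consider (G) "F \<in> Gam" | (HTa) "F \<in> HTAx num" | (SQ) "F \<in> SQAx num" | (Std) "F \<in> StdAx num" | (Df) "F \<in> DefsAx num"
    using F by (auto simp: Axioms_def)
  then show ?thesis
  proof cases
    case G
    then have "sentence num F" "ht_models num H T F" using g Gam_sentences by auto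
    then show ?thesis using sentence_env[of num F H T env] by (simp add: ht_models_def)
  next
    case HTa
    then obtain A B where AB: "F = Or A (Or (Imp A B) (Neg B))" by (auto simp: HTAx_def)
    show ?thesis using AB nb[of env B] persist[OF HT, of num env A] by auto
  next
    case SQ
    then obtain n A where nA: "F = Ex (GV n) (Imp A (All (GV n) A))" by (auto simp: SQAx_def)
    let ?e = "\<lambda>d. env(GV n := d)"
    have "\<exists>d. (htsat num H T (?e d) A \<longrightarrow> (\<forall>d'. htsat num H T (?e d') A))
              \<and> (csat num T (?e d) A \<longrightarrow> (\<forall>d'. csat num T (?e d') A))"
    proof (cases "\<forall>d'. csat num T (?e d') A")
      case True
      show ?thesis
      proof (cases "\<forall>d'. htsat num H T (?e d') A")
        case True2: True then show ?thesis using True by blast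
      next
        case False then show ?thesis using True by blast
      qed
    next
      case False
      then obtain d where "\<not> csat num T (?e d) A" by blast
      then show ?thesis using persist[OF HT, of num "?e d" A] by blast
    qed
    then show ?thesis using nA by simp
  next
    case Std
    then have st: "sentence num F" "sigma0 F" "nopred F" "csat num {} (env0 num) F" by (auto simp: StdAx_def)
    have "csat num T (env0 num) F" using st csat_indep[of F num "{}" "env0 num" T] by simp
    then have "csat num T env F" using sentence_env_c[OF st(1), of T env] by simp
    then show ?thesis using std_nopred[OF st(3,2)] by simp
  next
    case Df
    then have "ht_models num H T F" using s by (simp add: standard_ht_def)
    then show ?thesis using sentence_env[OF DefsAx_sentence[OF Df], of H T env] by (simp add: ht_models_def)
  qed
qed

lemma fvs_agree: "x \<notin> fvs D \<Longrightarrow> G \<in> D \<Longrightarrow> htsat num H T (env(x := d)) G = htsat num H T env G"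
  by (rule htsat_cong) (auto simp: fvs_def)

lemma soundness_deriv: "deriv num Gam D F \<Longrightarrow> svalid D F"
proof (induction rule: deriv.induct)
  case (assm F D) then show ?case by (auto simp: svalid_def)
next
  case (axiom F D) then show ?case by (auto simp: svalid_def intro: ax_valid)
next
  case (weaken D F D') then show ?case unfolding svalid_def by blast
next
  case (andI D F G) then show ?case by (auto simp: svalid_def)
next
  case (andE1 D F G) then show ?case by (auto simp: svalid_def)
next
  case (andE2 D F G) then show ?case by (auto simp: svalid_def)
next
  case (orI1 D F G) then show ?case by (auto simp: svalid_def)
next
  case (orI2 D G F) then show ?case by (auto simp: svalid_def)
next
  case (orE D F G H) then show ?case by (simp add: svalid_def) blast
next
  case (impI F D G)
  show ?case
  proof (rule svalidI)
    fix H T env assume s: "standard_ht num H T" and g: "\<forall>G\<in>Gam. ht_models num H T G" and e: "envok env"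
      and d: "\<forall>G\<in>D. htsat num H T env G"
    have HT: "H \<subseteq> T" using s by (simp add: standard_ht_def)
    have 1: "htsat num H T env F \<longrightarrow> htsat num H T env G"
      using svalidD[OF impI.IH s g e] d by auto
    have dT: "\<forall>G\<in>D. htsat num T T env G" using d persist[OF HT] by (simp add: htsat_TT)
    have 2: "csat num T env F \<longrightarrow> csat num T env G"
      using svalidD[OF impI.IH standard_TT[OF s g] e] dT by (auto simp: htsat_TT)
    show "htsat num H T env (Imp F G)" using 1 2 by simp
  qed
next
  case (impE D F G) then show ?case by (auto simp: svalid_def)
next
  case (botE D F) then show ?case unfolding svalid_def by (metis htsat.simps(1))
next
  case (allI D F x)
  show ?case
  proof (rule svalidI)
    fix H T env assume s: "standard_ht num H T" and g: "\<forall>G\<in>Gam. ht_models num H T G" and e: "envok env"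
      and d: "\<forall>G\<in>D. htsat num H T env G"
    have h: "htsat num H T (env(x := d)) F" if "envok (env(x := d))" for d
      using svalidD[OF allI.IH s g that] d fvs_agree[OF allI.hyps(2)] by auto
    show "htsat num H T env (All x F)"
      using h envok_GV[OF e] envok_IV[OF e] by (cases x) auto
  qed
next
  case (allE D x F t)
  show ?case
  proof (rule svalidI)
    fix H T env assume s: "standard_ht num H T" and g: "\<forall>G\<in>Gam. ht_models num H T G" and e: "envok env"
      and d: "\<forall>G\<in>D. htsat num H T env G"
    have a: "htsat num H T env (All x F)" using svalidD[OF allE.IH s g e d] .
    have "htsat num H T (env(x := eval num env t)) F"
    proof (cases x)
      case (GV n) then show ?thesis using a by simp
    next
      case (IV n)
      then obtain k where "eval num env t = num k" using eval_int[OF e] allE.hyps(2) by auto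
      then show ?thesis using a IV by simp
    qed
    then show "htsat num H T env (sub1 x t F)" using htsat_sub1[OF allE.hyps(3)] by simp
  qed
next
  case (exI D x t F)
  show ?case
  proof (rule svalidI)
    fix H T env assume s: "standard_ht num H T" and g: "\<forall>G\<in>Gam. ht_models num H T G" and e: "envok env"
      and d: "\<forall>G\<in>D. htsat num H T env G"
    have "htsat num H T env (sub1 x t F)" using svalidD[OF exI.IH s g e d] .
    then have a: "htsat num H T (env(x := eval num env t)) F" using htsat_sub1[OF exI.hyps(3)] by simp
    show "htsat num H T env (Ex x F)"
    proof (cases x)
      case (GV n) then show ?thesis using a by auto
    next
      case (IV n)
      then obtain k where "eval num env t = num k" using eval_int[OF e] exI.hyps(2) by auto
      then show ?thesis using a IV by auto
    qed
  qed
next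
  case (exE D x F G)
  show ?case
  proof (rule svalidI)
    fix H T env assume s: "standard_ht num H T" and g: "\<forall>G\<in>Gam. ht_models num H T G" and e: "envok env"
      and d: "\<forall>G\<in>D. htsat num H T env G"
    have ex: "htsat num H T env (Ex x F)" using svalidD[OF exE.IH(1) s g e d] .
    obtain dd where dd: "htsat num H T (env(x := dd)) F" "envok (env(x := dd))"
    proof (cases x)
      case (GV n) then show ?thesis using ex that envok_GV[OF e] by auto
    next
      case (IV n) then show ?thesis using ex that envok_IV[OF e] by auto
    qed
    have "\<forall>G'\<in>insert F D. htsat num H T (env(x := dd)) G'"
      using dd(1) d fvs_agree[OF exE.hyps(3)] by auto
    then have "htsat num H T (env(x := dd)) G" using svalidD[OF exE.IH(2) s g dd(2)] by blast
    then show "htsat num H T env G" using htsat_cong[of G "env(x := dd)" env] exE.hyps(4) by auto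
  qed
next
  case (eqRefl D t) then show ?case by (auto simp: svalid_def)
next
  case (eqSubst D t1 t2 x F)
  show ?case
  proof (rule svalidI)
    fix H T env assume s: "standard_ht num H T" and g: "\<forall>G\<in>Gam. ht_models num H T G" and e: "envok env"
      and d: "\<forall>G\<in>D. htsat num H T env G"
    have eq: "eval num env t1 = eval num env t2" using svalidD[OF eqSubst.IH(1) s g e d] by simp
    have "htsat num H T env (sub1 x t1 F)" using svalidD[OF eqSubst.IH(2) s g e d] .
    then show "htsat num H T env (sub1 x t2 F)"
      using htsat_sub1[OF eqSubst.hyps(3)] htsat_sub1[OF eqSubst.hyps(4)] eq by simp
  qed
next
  case (omegaG D n F)
  show ?case
  proof (rule svalidI)
    fix H T env assume s: "standard_ht num H T" and g: "\<forall>G\<in>Gam. ht_models num H T G" and e: "envok env"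
      and d: "\<forall>G\<in>D. htsat num H T env G"
    have "htsat num H T env (sub1 (GV n) (Cst c) F)" for c using svalidD[OF omegaG.IH[rule_format, of c, THEN conjunct2] s g e d] .
    then show "htsat num H T env (All (GV n) F)" using htsat_sub1[OF sub1ok_Cst, of num H T env "GV n" _ F] by simp
  qed
next
  case (omegaI D n F)
  show ?case
  proof (rule svalidI)
    fix H T env assume s: "standard_ht num H T" and g: "\<forall>G\<in>Gam. ht_models num H T G" and e: "envok env"
      and d: "\<forall>G\<in>D. htsat num H T env G"
    have "htsat num H T env (sub1 (IV n) (Cst (num k)) F)" for k using svalidD[OF omegaI.IH[rule_format, of k, THEN conjunct2] s g e d] .
    then show "htsat num H T env (All (IV n) F)" using htsat_sub1[OF sub1ok_Cst, of num H T env "IV n" _ F] by simp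
  qed
qed

theorem soundness:
  assumes "derivable num Gam F" "standard_ht num H T" "\<forall>G\<in>Gam. ht_models num H T G"
  shows "ht_models num H T F"
  using svalidD[OF soundness_deriv[OF assms(1)[unfolded derivable_def]] assms(2,3) envok_env0]
  by (simp add: ht_models_def)

end



fun edisj :: "('c,'p) form list \<Rightarrow> ('c,'p) form" where
  "edisj [] = Bot"
| "edisj (G # E) = Or G (edisj E)"

lemma wf_edisj: "\<forall>G\<in>set E. wf num G \<Longrightarrow> wf num (edisj E)"
  by (induction E) auto

lemma fv_edisj: "fv (edisj E) = (\<Union>G\<in>set E. fv G)"
  by (induction E) auto

definition Kc :: "nat \<Rightarrow> 'c \<Rightarrow> ('c,'p) form \<Rightarrow> ('c,'p) form" where
  "Kc n c A = All (IV n) (Imp (Eq (Cst c) (Var (IV n))) A)"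

definition K :: "nat \<Rightarrow> ('c,'p) form \<Rightarrow> ('c,'p) form" where
  "K n A = All (IV n) (Imp (Eq (Var (GV 0)) (Var (IV n))) A)"

lemma sub1_K: "fv A \<subseteq> {IV n} \<Longrightarrow> sub1 (GV 0) (Cst c) (K n A) = Kc n c A"
proof -
  assume a: "fv A \<subseteq> {IV n}"
  have "subst (((\<lambda>v. Var v)(GV 0 := Cst c))(IV n := Var (IV n))) A = A"
    by (rule subst_id) (use a in auto)
  then show ?thesis by (simp add: sub1_def K_def Kc_def)
qed

lemma sub1_Kc: "fv A \<subseteq> {IV n} \<Longrightarrow>
   sub1 (IV n) (Cst d) (Imp (Eq (Cst c) (Var (IV n))) A) = Imp (Eq (Cst c) (Cst d)) (sub1 (IV n) (Cst d) A)"
  by (simp add: sub1_def)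

lemma sub1_Eq[simp]: "sub1 x t (Eq a b) = Eq (substt ((\<lambda>v. Var v)(x:=t)) a) (substt ((\<lambda>v. Var v)(x:=t)) b)"
  by (simp add: sub1_def)

lemma wf_K: "wf num A \<Longrightarrow> wf num (K n A)" by (simp add: K_def)
lemma fv_K: "fv A \<subseteq> {IV n} \<Longrightarrow> fv (K n A) \<subseteq> {GV 0}" by (auto simp: K_def)

context L begin

lemma wfs_sent: "finite D \<Longrightarrow> \<forall>G\<in>D. sentence num G \<Longrightarrow> wfs D"
  by (simp add: wfs_def sentence_def)

lemma fvs_sent: "\<forall>G\<in>D. sentence num G \<Longrightarrow> fvs D = {}"
  by (simp add: fvs_def sentence_def)

lemma prv_edisj: "G \<in> set E \<Longrightarrow> prv D G \<Longrightarrow> \<forall>G\<in>set E. wf num G \<Longrightarrow> prv D (edisj E)"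
proof (induction E)
  case (Cons a E)
  show ?case
  proof (cases "G = a")
    case True then show ?thesis using Cons by (auto intro!: P_orI1 wf_edisj)
  next
    case False then show ?thesis using Cons by (auto intro!: P_orI2)
  qed
qed simp

lemma P_assmI: "F \<in> D \<Longrightarrow> wfs D \<Longrightarrow> prv D F" by (rule P_assm)

lemma P_weakI: "prv D F \<Longrightarrow> wfs (insert G D) \<Longrightarrow> prv (insert G D) F"
  by (erule P_weak) auto

lemma wfs_of_prv: "prv D F \<Longrightarrow> wfs D" using prv_wf by blast
lemma wf_of_prv: "prv D F \<Longrightarrow> wf num F" using prv_wf by blast

lemma L_Ex:
  assumes S: "finite S" "\<forall>G\<in>S. sentence num G" and e: "sentence num e"
    and exS: "Ex x A \<in> S" and A: "wf num A"
    and all: "\<And>c. sort_ok num x (Cst c) \<Longrightarrow> prv (insert (sub1 x (Cst c) A) S) e"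
  shows "prv S e"
proof -
  have wS: "wfs S" using S by (rule wfs_sent)
  have xe: "x \<notin> fv e" using e by (simp add: sentence_def)
  have "prv S (sub1 x (Cst c) (Imp A e))" if "sort_ok num x (Cst c)" for c
    using P_impI[OF all[OF that]] sub1_closed[OF xe] by simp
  then have al: "prv S (All x (Imp A e))"
    by (intro P_omega) (use A e wS in \<open>auto simp: sentence_def\<close>)
  have wSA: "wfs (insert A S)" using wS A by (simp add: wfs_insert)
  have "prv (insert A S) e"
    by (rule P_impE[OF P_allE_Var[OF P_weak[OF al _ wSA]] P_assmI]) (use wSA in auto)
  then show ?thesis
    by (rule P_exE[OF P_assmI[OF exS wS]]) (use S xe fvs_sent in auto)
qed

lemma L_Or: "Or A B \<in> S \<Longrightarrow> wfs S \<Longrightarrow> prv (insert A S) e \<Longrightarrow> prv (insert B S) e \<Longrightarrow> prv S e"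
  by (rule P_orE[OF P_assmI])

lemma L_Excl: "prv (insert G S) e \<Longrightarrow> prv S (Or G e) \<Longrightarrow> prv S e"
proof -
  assume a: "prv (insert G S) e" "prv S (Or G e)"
  have "wfs (insert e S)" using prv_wf[OF a(2)] by (simp add: wfs_insert)
  then have "prv (insert e S) e" by (intro P_assmI) auto
  then show ?thesis by (rule P_orE[OF a(2) a(1)])
qed

lemma SQ_ax: "wf num A \<Longrightarrow> Ex (GV n) (Imp A (All (GV n) A)) \<in> Axioms num"
  by (auto simp: Axioms_def SQAx_def)

lemma HT_ax: "wf num A \<Longrightarrow> wf num B \<Longrightarrow> Or A (Or (Imp A B) (Neg B)) \<in> Axioms num"
  by (auto simp: Axioms_def HTAx_def)

lemma L_CD:
  assumes S: "finite S" "\<forall>G\<in>S. sentence num G" and e: "sentence num e"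
    and A: "wf num A" "fv A \<subseteq> {GV n}"
    and all: "\<And>c. prv S (Or (sub1 (GV n) (Cst c) A) e)"
  shows "prv S (Or (All (GV n) A) e)"
proof -
  let ?x = "GV n"
  have wS: "wfs S" using S by (rule wfs_sent)
  have xe: "?x \<notin> fv e" using e by (simp add: sentence_def)
  have we: "wf num e" using e by (simp add: sentence_def)
  have al: "prv S (All ?x (Or A e))"
    by (rule P_omegaG) (use all sub1_closed[OF xe] A we wS in auto)
  have sq: "prv S (Ex ?x (Imp A (All ?x A)))"
    by (rule P_ax) (use SQ_ax[OF A(1)] A wS in auto)
  let ?D1 = "insert (Imp A (All ?x A)) S"
  have w1: "wfs ?D1" using wS A by (simp add: wfs_insert)
  have oe: "prv ?D1 (Or A e)" by (rule P_allE_Var[OF P_weak[OF al _ w1]]) auto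
  have w2: "wfs (insert A ?D1)" "wfs (insert e ?D1)" using w1 A we by (auto simp: wfs_insert)
  have c1: "prv (insert A ?D1) (Or (All ?x A) e)"
    by (rule P_orI1[OF P_impE[OF P_assmI P_assmI]]) (use w2 we in auto)
  have c2: "prv (insert e ?D1) (Or (All ?x A) e)"
    by (rule P_orI2[OF P_assmI]) (use w2 A in auto)
  have "prv ?D1 (Or (All ?x A) e)" by (rule P_orE[OF oe c1 c2])
  then show ?thesis
    by (rule P_exE[OF sq]) (use S xe fvs_sent A in auto)
qed

lemma Std_ax: "sentence num G \<Longrightarrow> sigma0 G \<Longrightarrow> nopred G \<Longrightarrow> csat num {} (env0 num) G \<Longrightarrow> G \<in> Axioms num"
  by (auto simp: Axioms_def StdAx_def)

lemma num_inj: "num j = num k \<longleftrightarrow> j = k"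
  using num_mono strict_mono_eq by blast

lemma L_Kc:
  assumes wS: "wfs S" and A: "wf num A" "fv A \<subseteq> {IV n}"
    and h: "\<And>k. c = num k \<Longrightarrow> prv S (sub1 (IV n) (Cst (num k)) A)"
  shows "prv S (Kc n c A)"
  unfolding Kc_def
proof (rule P_omegaI)
  fix k
  let ?E = "Eq (Cst c) (Cst (num k))"
  have wE: "wfs (insert ?E S)" using wS by (simp add: wfs_insert)
  have wA: "wf num (sub1 (IV n) (Cst (num k)) A)" using A by (simp add: wf_sub1)
  have "prv (insert ?E S) (sub1 (IV n) (Cst (num k)) A)"
  proof (cases "c = num k")
    case True then show ?thesis using h[OF True] wE by (auto intro: P_weakI)
  next
    case False
    have "Neg ?E \<in> Axioms num"
      by (rule Std_ax) (use False in \<open>auto simp: sentence_def Neg_def\<close>)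
    then have "prv (insert ?E S) (Neg ?E)" using wE by (intro P_ax) auto
    then have "prv (insert ?E S) Bot" by (rule P_negE) (use wE in \<open>auto intro: P_assmI\<close>)
    then show ?thesis using wA by (rule P_botE)
  qed
  then show "prv S (sub1 (IV n) (Cst (num k)) (Imp (Eq (Cst c) (Var (IV n))) A))"
    using A by (simp add: sub1_Kc P_impI)
qed (use A wS in auto)

lemma L_K3:
  assumes p: "prv S (All (GV 0) (K n A))" and A: "wf num A" "fv A \<subseteq> {IV n}"
  shows "prv S (All (IV n) A)"
proof (rule P_omegaI)
  fix k
  have wS: "wfs S" using p by (rule wfs_of_prv)
  have "prv S (Kc n (num k) A)" using P_allE[OF p, of "num k"] sub1_K[OF A(2)] by simp
  then have "prv S (sub1 (IV n) (Cst (num k)) (Imp (Eq (Cst (num k)) (Var (IV n))) A))"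
    unfolding Kc_def by (rule P_allE) simp
  then have "prv S (Imp (Eq (Cst (num k)) (Cst (num k))) (sub1 (IV n) (Cst (num k)) A))"
    using A by (simp add: sub1_Kc)
  then show "prv S (sub1 (IV n) (Cst (num k)) A)"
    by (rule P_impE) (rule P_eqRefl[OF wS], simp)
qed (use A p in \<open>auto dest: wfs_of_prv\<close>)

lemma L_CDI:
  assumes S: "finite S" "\<forall>G\<in>S. sentence num G" and e: "sentence num e"
    and A: "wf num A" "fv A \<subseteq> {IV n}"
    and all: "\<And>k. prv S (Or (sub1 (IV n) (Cst (num k)) A) e)"
  shows "prv S (Or (All (IV n) A) e)"
proof -
  have wS: "wfs S" using S by (rule wfs_sent)
  have we: "wf num e" using e by (simp add: sentence_def)
  have wK: "wf num (Kc n c A)" for c using A by (simp add: Kc_def)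
  have "prv S (Or (sub1 (GV 0) (Cst c) (K n A)) e)" for c
  proof -
    have "prv S (Or (Kc n c A) e)"
    proof (cases "c \<in> range num")
      case True
      then obtain j where j: "c = num j" by auto
      let ?Aj = "sub1 (IV n) (Cst (num j)) A"
      have w1: "wfs (insert ?Aj S)" "wfs (insert e S)" using wS we A by (auto simp: wfs_insert wf_sub1)
      have c1: "prv (insert ?Aj S) (Or (Kc n c A) e)"
      proof (rule P_orI1[OF L_Kc[OF w1(1) A]])
        fix k assume "c = num k"
        then have "k = j" using j num_inj by simp
        then show "prv (insert ?Aj S) (sub1 (IV n) (Cst (num k)) A)" using w1 by (auto intro: P_assmI)
      qed (rule we)
      have c2: "prv (insert e S) (Or (Kc n c A) e)" using w1 wK by (intro P_orI2[OF P_assmI]) auto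
      show ?thesis by (rule P_orE[OF all[of j] c1 c2])
    next
      case False
      have "prv S (Kc n c A)" by (rule L_Kc[OF wS A]) (use False in auto)
      then show ?thesis using we by (rule P_orI1)
    qed
    then show ?thesis using sub1_K[OF A(2)] by simp
  qed
  then have "prv S (Or (All (GV 0) (K n A)) e)"
    by (intro L_CD[OF S e wf_K[OF A(1)] fv_K[OF A(2)]])
  moreover
  have w2: "wfs (insert (All (GV 0) (K n A)) S)" "wfs (insert e S)"
    using wS we A by (auto simp: wfs_insert wf_K)
  have "prv (insert (All (GV 0) (K n A)) S) (Or (All (IV n) A) e)"
    by (rule P_orI1[OF L_K3[OF P_assmI A]]) (use w2 we in auto)
  moreover have "prv (insert e S) (Or (All (IV n) A) e)"
    using w2 A by (intro P_orI2[OF P_assmI]) auto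
  ultimately show ?thesis by (rule P_orE)
qed

lemma L_CDx:
  assumes S: "finite S" "\<forall>G\<in>S. sentence num G" and e: "sentence num e"
    and A: "wf num A" "fv A \<subseteq> {x}"
    and all: "\<And>c. sort_ok num x (Cst c) \<Longrightarrow> prv S (Or (sub1 x (Cst c) A) e)"
  shows "prv S (Or (All x A) e)"
proof (cases x)
  case (GV n) then show ?thesis using L_CD[OF S e A(1), of n] A all by simp
next
  case (IV n) then show ?thesis using L_CDI[OF S e A(1), of n] A all by simp
qed


definition nn :: "('c,'p) form \<Rightarrow> ('c,'p) form" where "nn G = Neg (Neg G)"

lemma P_contra: "prv D G \<Longrightarrow> Neg G \<in> D \<Longrightarrow> prv D Bot"
  by (rule P_negE[OF P_assmI]) (auto dest: wfs_of_prv)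

lemma wfs_ins: "wfs (insert F D) \<longleftrightarrow> wf num F \<and> wfs D" by (rule wfs_insert)

lemma L_NN1: "prv D G \<Longrightarrow> prv D (nn G)"
proof -
  assume p: "prv D G"
  have w: "wfs (insert (Neg G) D)" using prv_wf[OF p] by (simp add: wfs_insert)
  have "prv (insert (Neg G) D) Bot"
    by (rule P_negE[OF P_assmI P_weak[OF p]]) (use w in auto)
  then show ?thesis unfolding nn_def by (rule P_negI)
qed

lemma L_NNmp: "prv D (nn (Imp A B)) \<Longrightarrow> prv D (nn A) \<Longrightarrow> prv D (nn B)"
proof -
  assume p1: "prv D (nn (Imp A B))" and p2: "prv D (nn A)"
  have wD: "wfs D" and wI: "wf num A" "wf num B" using prv_wf[OF p1] by (auto simp: nn_def Neg_def)
  let ?D1 = "insert (Neg B) D"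
  let ?D2 = "insert A ?D1"
  let ?D3 = "insert (Imp A B) ?D2"
  have w: "wfs ?D1" "wfs ?D2" "wfs ?D3" using wD wI by (auto simp: wfs_insert)
  have "prv ?D3 B" by (rule P_impE[OF P_assmI P_assmI]) (use w in auto)
  then have "prv ?D3 Bot" by (rule P_contra) auto
  then have q1: "prv ?D2 (Neg (Imp A B))" by (rule P_negI)
  have q2: "prv ?D2 (Neg (Neg (Imp A B)))" by (rule P_weak[OF p1[unfolded nn_def]]) (use w in auto)
  have "prv ?D2 Bot" by (rule P_negE[OF q2 q1])
  then have q3: "prv ?D1 (Neg A)" by (rule P_negI)
  have q4: "prv ?D1 (Neg (Neg A))" by (rule P_weak[OF p2[unfolded nn_def]]) (use w in auto)
  have "prv ?D1 Bot" by (rule P_negE[OF q4 q3])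
  then show ?thesis unfolding nn_def by (rule P_negI)
qed

lemma L_NNbot: "prv D (nn Bot) \<Longrightarrow> prv D Bot"
proof -
  assume p: "prv D (nn Bot)"
  have w: "wfs (insert Bot D)" using prv_wf[OF p] by (simp add: wfs_insert)
  have "prv D (Neg Bot)" unfolding Neg_def by (rule P_impI[OF P_assmI]) (use w in auto)
  then show ?thesis using p unfolding nn_def by (rule P_negE[rotated])
qed

lemma L_WEM: "wfs D \<Longrightarrow> wf num A \<Longrightarrow> prv D (Or (Neg A) (nn A))"
proof -
  assume wD: "wfs D" and wA: "wf num A"
  have ax: "prv D (Or (Neg A) (Or (Imp (Neg A) A) (Neg A)))"
    by (rule P_ax) (use HT_ax[of "Neg A" A] wA wD in auto)
  have c1: "prv (insert (Neg A) D) (Or (Neg A) (nn A))"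
    by (rule P_orI1[OF P_assmI]) (use wD wA in \<open>auto simp: wfs_insert nn_def\<close>)
  let ?O = "Or (Imp (Neg A) A) (Neg A)"
  let ?D1 = "insert ?O D"
  let ?D2 = "insert (Imp (Neg A) A) ?D1"
  let ?D3 = "insert (Neg A) ?D2"
  have w: "wfs ?D1" "wfs ?D2" "wfs ?D3" "wfs (insert (Neg A) ?D1)" using wD wA by (auto simp: wfs_insert)
  have "prv ?D3 A" by (rule P_impE[OF P_assmI P_assmI]) (use w in auto)
  then have "prv ?D3 Bot" by (rule P_contra) auto
  then have "prv ?D2 (nn A)" unfolding nn_def by (rule P_negI)
  then have d2: "prv ?D2 (Or (Neg A) (nn A))" by (rule P_orI2) (use wA in simp)
  have d3: "prv (insert (Neg A) ?D1) (Or (Neg A) (nn A))"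
    by (rule P_orI1[OF P_assmI]) (use w wA in \<open>auto simp: nn_def\<close>)
  have "prv ?D1 (Or (Neg A) (nn A))" by (rule P_orE[OF P_assmI d2 d3]) (use w in auto)
  then show ?thesis by (rule P_orE[OF ax c1])
qed

lemma L_NNall:
  assumes p: "prv D (All (GV n) (nn A))" and fD: "GV n \<notin> fvs D" and A: "fv A \<subseteq> {GV n}"
  shows "prv D (nn (All (GV n) A))"
proof -
  let ?x = "GV n"
  have wD: "wfs D" and wA: "wf num A" using prv_wf[OF p] by (auto simp: nn_def)
  have sq: "prv D (Ex ?x (Imp A (All ?x A)))"
    by (rule P_ax) (use SQ_ax[OF wA] wA wD in auto)
  let ?D1 = "insert (Imp A (All ?x A)) D"
  let ?D2 = "insert (Neg (All ?x A)) ?D1"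
  let ?D3 = "insert A ?D2"
  have w: "wfs ?D1" "wfs ?D2" "wfs ?D3" using wD wA by (auto simp: wfs_insert)
  have "prv ?D3 (All ?x A)" by (rule P_impE[OF P_assmI P_assmI]) (use w in auto)
  then have "prv ?D3 Bot" by (rule P_contra) auto
  then have "prv ?D2 (Neg A)" by (rule P_negI)
  moreover have "prv ?D2 (nn A)" by (rule P_allE_Var[OF P_weak[OF p]]) (use w in auto)
  ultimately have "prv ?D2 Bot" unfolding nn_def by (rule P_negE[rotated])
  then have "prv ?D1 (nn (All ?x A))" unfolding nn_def by (rule P_negI)
  then show ?thesis by (rule P_exE[OF sq]) (use fD A in \<open>auto simp: nn_def\<close>)
qed

lemma L_ExAllNeg:
  assumes p1: "prv D (Ex x A)" and p2: "prv D (All x (Neg A))" and fD: "x \<notin> fvs D"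
  shows "prv D Bot"
proof -
  have w: "wfs (insert A D)" using prv_wf[OF p2] by (simp add: wfs_insert)
  have "prv (insert A D) Bot"
    by (rule P_negE[OF P_allE_Var[OF P_weak[OF p2]] P_assmI]) (use w in auto)
  then show ?thesis by (rule P_exE[OF p1]) (use fD in auto)
qed

lemma L_OrNeg: "prv D (Or A B) \<Longrightarrow> prv D (Neg A) \<Longrightarrow> prv D (Neg B) \<Longrightarrow> prv D Bot"
proof -
  assume p: "prv D (Or A B)" "prv D (Neg A)" "prv D (Neg B)"
  have w: "wfs (insert A D)" "wfs (insert B D)" using prv_wf[OF p(1)] by (auto simp: wfs_insert)
  show ?thesis
    by (rule P_orE[OF p(1) P_negE[OF P_weak[OF p(2)] P_assmI] P_negE[OF P_weak[OF p(3)] P_assmI]])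
       (use w in auto)
qed

lemma L_NegImp: "prv D (Neg A) \<Longrightarrow> wf num B \<Longrightarrow> prv D (Imp A B)"
proof -
  assume p: "prv D (Neg A)" and wB: "wf num B"
  have w: "wfs (insert A D)" using prv_wf[OF p] by (auto simp: wfs_insert)
  have "prv (insert A D) Bot" by (rule P_negE[OF P_weak[OF p] P_assmI]) (use w in auto)
  then have "prv (insert A D) B" using wB by (rule P_botE)
  then show ?thesis by (rule P_impI)
qed

lemma L_ImpB: "prv D B \<Longrightarrow> wf num A \<Longrightarrow> prv D (Imp A B)"
proof -
  assume p: "prv D B" and wA: "wf num A"
  have w: "wfs (insert A D)" using prv_wf[OF p] wA by (auto simp: wfs_insert)
  show ?thesis by (rule P_impI[OF P_weak[OF p]]) (use w in auto)
qed

lemma L_NNset: "finite D0 \<Longrightarrow> prv D0 G \<Longrightarrow> prv (nn ` D0) (nn G)"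
proof (induction D0 arbitrary: G rule: finite_induct)
  case empty then show ?case using L_NN1 by simp
next
  case (insert a D0)
  have "prv D0 (Imp a G)" using insert.prems by (rule P_impI)
  then have p: "prv (nn ` D0) (nn (Imp a G))" by (rule insert.IH)
  have wa: "wf num a" using prv_wf[OF insert.prems] by (simp add: wfs_insert)
  have w: "wfs (nn ` insert a D0)" using prv_wf[OF p] wa by (auto simp: wfs_def nn_def)
  have "prv (nn ` insert a D0) (nn (Imp a G))" by (rule P_weak[OF p]) (use w in auto)
  moreover have "prv (nn ` insert a D0) (nn a)" by (rule P_assmI) (use w in auto)
  ultimately show ?case by (rule L_NNmp)
qed

end



instance var :: countable by countable_datatype
instance cmp :: countable by countable_datatype
instance trm :: (countable) countable by countable_datatype
instance form :: (countable, countable) countable by countable_datatype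

context L begin

definition witO :: "('c,'p) form set \<Rightarrow> ('c,'p) form \<Rightarrow> ('c,'p) form \<Rightarrow> ('c,'p) form \<Rightarrow> ('c,'p) form" where
  "witO S e A B = (if \<not> prv (insert A S) e then A else B)"

definition witE :: "('c,'p) form set \<Rightarrow> ('c,'p) form \<Rightarrow> var \<Rightarrow> ('c,'p) form \<Rightarrow> ('c,'p) form" where
  "witE S e x A = sub1 x (Cst (SOME c. sort_ok num x (Cst c) \<and> \<not> prv (insert (sub1 x (Cst c) A) S) e)) A"

definition witA :: "('c,'p) form set \<Rightarrow> ('c,'p) form \<Rightarrow> var \<Rightarrow> ('c,'p) form \<Rightarrow> ('c,'p) form" where
  "witA S e x A = sub1 x (Cst (SOME c. sort_ok num x (Cst c) \<and> \<not> prv S (Or (sub1 x (Cst c) A) e))) A"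

fun addwit :: "('c,'p) form set \<Rightarrow> ('c,'p) form \<Rightarrow> ('c,'p) form \<Rightarrow> ('c,'p) form set" where
  "addwit S e (Or A B) = insert (witO S e A B) S"
| "addwit S e (Ex x A) = insert (witE S e x A) S"
| "addwit S e _ = S"

fun exwit :: "('c,'p) form set \<Rightarrow> ('c,'p) form \<Rightarrow> ('c,'p) form \<Rightarrow> ('c,'p) form list" where
  "exwit S e (All x A) = [witA S e x A]"
| "exwit S e _ = []"

definition step :: "('c,'p) form set \<times> ('c,'p) form list \<Rightarrow> ('c,'p) form \<Rightarrow> ('c,'p) form set \<times> ('c,'p) form list" where
  "step SE G = (let S = fst SE; E = snd SE in
     if \<not> sentence num G then (S, E)
     else if \<not> prv (insert G S) (edisj E) then (addwit (insert G S) (edisj E) G, E)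
     else (S, exwit S (edisj (G # E)) G @ G # E))"

definition inv :: "('c,'p) form set \<times> ('c,'p) form list \<Rightarrow> bool" where
  "inv SE = (finite (fst SE) \<and> (\<forall>G\<in>fst SE. sentence num G) \<and> (\<forall>G\<in>set (snd SE). sentence num G)
     \<and> \<not> prv (fst SE) (edisj (snd SE)))"

lemma sentence_edisj: "\<forall>G\<in>set E. sentence num G \<Longrightarrow> sentence num (edisj E)"
  by (simp add: sentence_def wf_edisj fv_edisj)

lemma sentence_Or: "sentence num (Or A B) \<longleftrightarrow> sentence num A \<and> sentence num B"
  by (auto simp: sentence_def)

lemma sentence_body: "sentence num (All x A) \<Longrightarrow> wf num A \<and> fv A \<subseteq> {x}"
  "sentence num (Ex x A) \<Longrightarrow> wf num A \<and> fv A \<subseteq> {x}"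
  by (auto simp: sentence_def)

lemma sentence_wit: "sentence num (All x A) \<Longrightarrow> sort_ok num x (Cst c) \<Longrightarrow> sentence num (sub1 x (Cst c) A)"
  "sentence num (Ex x A) \<Longrightarrow> sort_ok num x (Cst c) \<Longrightarrow> sentence num (sub1 x (Cst c) A)"
  by (auto intro!: sentence_sub1 dest: sentence_body)

lemma exE_wit:
  assumes i: "inv (S, E)" and G: "sentence num (Ex x A)" "G = Ex x A"
    and np: "\<not> prv (insert G S) (edisj E)"
  shows "\<exists>c. sort_ok num x (Cst c) \<and> \<not> prv (insert (sub1 x (Cst c) A) (insert G S)) (edisj E)"
proof (rule ccontr)
  assume "\<not> ?thesis"
  then have "\<And>c. sort_ok num x (Cst c) \<Longrightarrow> prv (insert (sub1 x (Cst c) A) (insert G S)) (edisj E)" by blast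
  moreover have "finite (insert G S)" "\<forall>H\<in>insert G S. sentence num H" "sentence num (edisj E)"
    using i G by (auto simp: inv_def intro: sentence_edisj)
  moreover have "Ex x A \<in> insert G S" "wf num A" using G sentence_body(2)[of x A] by auto
  ultimately have "prv (insert G S) (edisj E)"
    using L_Ex[of "insert G S" "edisj E" x A] by blast
  then show False using np by simp
qed

lemma exA_wit:
  assumes i: "inv (S, E)" and G: "sentence num (All x A)" "G = All x A"
    and np: "\<not> prv S (Or G (edisj E))"
  shows "\<exists>c. sort_ok num x (Cst c) \<and> \<not> prv S (Or (sub1 x (Cst c) A) (Or G (edisj E)))"
proof (rule ccontr)
  assume "\<not> ?thesis"
  then have *: "\<And>c. sort_ok num x (Cst c) \<Longrightarrow> prv S (Or (sub1 x (Cst c) A) (Or G (edisj E)))" by blast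
  have sS: "finite S" "\<forall>G\<in>S. sentence num G" "sentence num (edisj E)"
    using i by (auto simp: inv_def intro: sentence_edisj)
  have se: "sentence num (Or G (edisj E))" using G sS by (simp add: sentence_Or)
  have "prv S (Or (All x A) (Or G (edisj E)))"
    by (rule L_CDx[OF sS(1,2) se]) (use G sentence_body * in auto)
  then have p: "prv S (Or G (Or G (edisj E)))" using G by simp
  have wS: "wfs S" using sS by (intro wfs_sent)
  have "prv (insert G S) (Or G (edisj E))"
    by (rule P_orI1[OF P_assmI]) (use wS se G in \<open>auto simp: wfs_insert sentence_def\<close>)
  then have "prv S (Or G (edisj E))" using p by (rule L_Excl)
  then show False using np by simp
qed

lemma inv_step: assumes i: "inv SE" shows "inv (step SE G)"
proof -
  obtain S E where SE: "SE = (S, E)" by (cases SE)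
  have sS: "finite S" "\<forall>G\<in>S. sentence num G" "\<forall>G\<in>set E. sentence num G" "\<not> prv S (edisj E)"
    using i SE by (auto simp: inv_def)
  have wS: "wfs S" using sS by (intro wfs_sent)
  show ?thesis
  proof (cases "sentence num G")
    case False then show ?thesis using i SE by (simp add: step_def)
  next
    case sG: True
    show ?thesis
    proof (cases "prv (insert G S) (edisj E)")
      case np: False
      have step: "step SE G = (addwit (insert G S) (edisj E) G, E)" using SE sG np by (simp add: step_def)
      have base: "finite (insert G S)" "\<forall>H\<in>insert G S. sentence num H" using sS sG by auto
      have "inv (addwit (insert G S) (edisj E) G, E)"
      proof (cases G)
        case (Or A B)
        have sAB: "sentence num A" "sentence num B" using sG Or by (auto simp: sentence_Or)
        have wI: "wfs (insert G S)" using base by (intro wfs_sent)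
        have "\<not> prv (insert (witO (insert G S) (edisj E) A B) (insert G S)) (edisj E)"
        proof (cases "prv (insert A (insert G S)) (edisj E)")
          case True
          then have "witO (insert G S) (edisj E) A B = B" by (simp add: witO_def)
          moreover have "\<not> prv (insert B (insert G S)) (edisj E)"
            using L_Or[of A B "insert G S" "edisj E"] True np Or wI by auto
          ultimately show ?thesis by simp
        next
          case False then show ?thesis by (simp add: witO_def)
        qed
        moreover have "sentence num (witO (insert G S) (edisj E) A B)" using sAB by (simp add: witO_def)
        ultimately show ?thesis using Or base sS by (simp add: inv_def)
      next
        case (Ex x A)
        obtain c where c: "sort_ok num x (Cst c)" "\<not> prv (insert (sub1 x (Cst c) A) (insert G S)) (edisj E)"
          using exE_wit[OF i[unfolded SE] sG[unfolded Ex] Ex np] by blast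
        let ?P = "\<lambda>c. sort_ok num x (Cst c) \<and> \<not> prv (insert (sub1 x (Cst c) A) (insert G S)) (edisj E)"
        have "?P (SOME c. ?P c)" using c by (intro someI[of ?P c]) simp
        then show ?thesis using Ex base sS sG sentence_wit(2)[of x A]
          by (simp add: inv_def witE_def)
      qed (use base sS np in \<open>simp_all add: inv_def\<close>)
      then show ?thesis using step by simp
    next
      case p: True
      have step: "step SE G = (S, exwit S (edisj (G # E)) G @ G # E)" using SE sG p by (simp add: step_def)
      have np2: "\<not> prv S (Or G (edisj E))"
        using L_Excl[OF p] sS(4) by blast
      have "inv (S, exwit S (edisj (G # E)) G @ G # E)"
      proof (cases G)
        case (All x A)
        obtain c where c: "sort_ok num x (Cst c)" "\<not> prv S (Or (sub1 x (Cst c) A) (Or G (edisj E)))"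
          using exA_wit[OF i[unfolded SE] sG[unfolded All] All np2] by blast
        let ?P = "\<lambda>c. sort_ok num x (Cst c) \<and> \<not> prv S (Or (sub1 x (Cst c) A) (Or G (edisj E)))"
        have "?P (SOME c. ?P c)" using c by (intro someI[of ?P c]) simp
        then show ?thesis using All sS sG sentence_wit(1)[of x A]
          by (simp add: inv_def witA_def)
      qed (use sS sG np2 in \<open>simp_all add: inv_def\<close>)
      then show ?thesis using step by simp
    qed
  qed
qed

context
  fixes F :: "('c,'p) form"
  assumes F: "sentence num F" "\<not> prv {} F"
begin

primrec ch :: "nat \<Rightarrow> ('c,'p) form set \<times> ('c,'p) form list" where
  "ch 0 = ({}, [F])"
| "ch (Suc k) = step (ch k) (from_nat k)"

lemma inv0: "inv (ch 0)"
proof -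
  have "\<not> prv {} (Or F Bot)"
  proof
    assume p: "prv {} (Or F Bot)"
    have w: "wfs {F}" "wfs {Bot}" using F by (auto simp: wfs_def sentence_def)
    have "prv {} F"
      by (rule P_orE[OF p P_assmI P_botE[OF P_assmI]]) (use w F in \<open>auto simp: sentence_def\<close>)
    then show False using F by simp
  qed
  then show ?thesis using F by (simp add: inv_def)
qed

lemma inv_ch: "inv (ch k)"
proof (induction k)
  case 0 show ?case by (rule inv0)
next
  case (Suc k) then show ?case by (simp add: inv_step)
qed

definition Dl :: "('c,'p) form set" where "Dl = (\<Union>k. fst (ch k))"
definition El :: "('c,'p) form set" where "El = (\<Union>k. set (snd (ch k)))"

lemma ch_mono1: "fst (ch k) \<subseteq> fst (ch (Suc k))" "set (snd (ch k)) \<subseteq> set (snd (ch (Suc k)))"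
proof -
  obtain S E where SE: "ch k = (S, E)" by (cases "ch k")
  have "S \<subseteq> addwit (insert G S) e G" for G e by (cases G) auto
  then show "fst (ch k) \<subseteq> fst (ch (Suc k))" "set (snd (ch k)) \<subseteq> set (snd (ch (Suc k)))"
    using SE by (auto simp: step_def Let_def)
qed

lemma ch_mono: "k \<le> m \<Longrightarrow> fst (ch k) \<subseteq> fst (ch m) \<and> set (snd (ch k)) \<subseteq> set (snd (ch m))"
proof (induction m)
  case (Suc m) then show ?case using ch_mono1[of m] by (cases "k = Suc m") auto
qed simp

lemma finite_in_ch: "finite D \<Longrightarrow> D \<subseteq> Dl \<Longrightarrow> \<exists>m. D \<subseteq> fst (ch m)"
proof (induction D rule: finite_induct)
  case (insert a D)
  then obtain m where m: "D \<subseteq> fst (ch m)" by auto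
  obtain k where k: "a \<in> fst (ch k)" using insert.prems by (auto simp: Dl_def)
  have "insert a D \<subseteq> fst (ch (max m k))"
    using m k ch_mono[of m "max m k"] ch_mono[of k "max m k"] by auto
  then show ?case by blast
qed simp

lemma Dl_sent: "G \<in> Dl \<Longrightarrow> sentence num G"
  using inv_ch by (auto simp: Dl_def inv_def)

lemma El_sent: "G \<in> El \<Longrightarrow> sentence num G"
  using inv_ch by (auto simp: El_def inv_def)

lemma not_prv_El: "finite D \<Longrightarrow> D \<subseteq> Dl \<Longrightarrow> G \<in> El \<Longrightarrow> \<not> prv D G"
proof
  assume a: "finite D" "D \<subseteq> Dl" "G \<in> El" "prv D G"
  obtain m where m: "D \<subseteq> fst (ch m)" using finite_in_ch a by blast
  obtain k where k: "G \<in> set (snd (ch k))" using a by (auto simp: El_def)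
  let ?n = "max m k"
  have sub: "D \<subseteq> fst (ch ?n)" "G \<in> set (snd (ch ?n))"
    using m k ch_mono[of m ?n] ch_mono[of k ?n] by auto
  have i: "inv (ch ?n)" by (rule inv_ch)
  have wS: "wfs (fst (ch ?n))" using i by (intro wfs_sent) (auto simp: inv_def)
  have "prv (fst (ch ?n)) G" by (rule P_weak[OF a(4) sub(1) wS])
  then have "prv (fst (ch ?n)) (edisj (snd (ch ?n)))"
    by (rule prv_edisj[OF sub(2)]) (use i in \<open>auto simp: inv_def sentence_def\<close>)
  then show False using i by (simp add: inv_def)
qed

lemma Dl_El_disj: "G \<in> Dl \<Longrightarrow> G \<notin> El"
proof
  assume a: "G \<in> Dl" "G \<in> El"
  have w: "wfs {G}" using Dl_sent[OF a(1)] by (simp add: wfs_def sentence_def)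
  have "prv {G} G" by (rule P_assmI) (use w in auto)
  then show False using not_prv_El[of "{G}" G] a by auto
qed

lemma at_step:
  assumes sG: "sentence num G"
  defines "k \<equiv> to_nat G"
  shows "(\<not> prv (insert G (fst (ch k))) (edisj (snd (ch k))) \<and>
           ch (Suc k) = (addwit (insert G (fst (ch k))) (edisj (snd (ch k))) G, snd (ch k)))
       \<or> (prv (insert G (fst (ch k))) (edisj (snd (ch k))) \<and>
           ch (Suc k) = (fst (ch k), exwit (fst (ch k)) (edisj (G # snd (ch k))) G @ G # snd (ch k)))"
  using sG by (simp add: k_def step_def Let_def)

lemma in_Dl: "G \<in> fst (ch k) \<Longrightarrow> G \<in> Dl" by (auto simp: Dl_def)
lemma in_El: "G \<in> set (snd (ch k)) \<Longrightarrow> G \<in> El" by (auto simp: El_def)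

lemma Dl_or_El: "sentence num G \<Longrightarrow> G \<in> Dl \<or> G \<in> El"
proof -
  assume sG: "sentence num G"
  let ?k = "to_nat G"
  have "S \<subseteq> addwit (insert G S) e G" "G \<in> addwit (insert G S) e G" for S e by (cases G; auto)+
  then show ?thesis using at_step[OF sG] in_Dl[of G "Suc ?k"] in_El[of G "Suc ?k"]
    by (metis fst_conv list.set_intros(1) snd_conv Un_iff set_append)
qed

lemma Dl_closed: "finite D \<Longrightarrow> D \<subseteq> Dl \<Longrightarrow> prv D G \<Longrightarrow> sentence num G \<Longrightarrow> G \<in> Dl"
  using Dl_or_El not_prv_El by blast

lemma F_notin: "F \<notin> Dl"
proof -
  have "F \<in> El" using in_El[of F 0] by simp
  then show ?thesis using Dl_El_disj by blast
qed

lemma Dl_added: "G \<in> Dl \<Longrightarrow> \<not> prv (insert G (fst (ch (to_nat G)))) (edisj (snd (ch (to_nat G))))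
   \<and> addwit (insert G (fst (ch (to_nat G)))) (edisj (snd (ch (to_nat G)))) G \<subseteq> Dl"
proof -
  assume a: "G \<in> Dl"
  have sG: "sentence num G" using Dl_sent[OF a] .
  have "G \<notin> El" using Dl_El_disj[OF a] .
  then have np: "\<not> prv (insert G (fst (ch (to_nat G)))) (edisj (snd (ch (to_nat G))))"
    using at_step[OF sG] in_El[of G "Suc (to_nat G)"] by auto
  then have "ch (Suc (to_nat G)) = (addwit (insert G (fst (ch (to_nat G)))) (edisj (snd (ch (to_nat G)))) G, snd (ch (to_nat G)))"
    using at_step[OF sG] by auto
  then show ?thesis using np in_Dl[of _ "Suc (to_nat G)"] by (metis fst_conv subsetI)
qed

lemma Dl_prime: "Or A B \<in> Dl \<Longrightarrow> A \<in> Dl \<or> B \<in> Dl"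
  using Dl_added[of "Or A B"] by (auto simp: witO_def split: if_splits)

lemma Dl_exwit: assumes a: "Ex x A \<in> Dl" shows "\<exists>c. sort_ok num x (Cst c) \<and> sub1 x (Cst c) A \<in> Dl"
proof -
  let ?G = "Ex x A"
  let ?S = "fst (ch (to_nat ?G))" and ?E = "snd (ch (to_nat ?G))"
  have d: "\<not> prv (insert ?G ?S) (edisj ?E)" "witE (insert ?G ?S) (edisj ?E) x A \<in> Dl"
    using Dl_added[OF a] by auto
  have sG: "sentence num ?G" using Dl_sent[OF a] .
  obtain c where c: "sort_ok num x (Cst c)" "\<not> prv (insert (sub1 x (Cst c) A) (insert ?G ?S)) (edisj ?E)"
    using exE_wit[of ?S ?E, OF _ sG refl d(1)] inv_ch by (metis prod.collapse)
  let ?P = "\<lambda>c. sort_ok num x (Cst c) \<and> \<not> prv (insert (sub1 x (Cst c) A) (insert ?G ?S)) (edisj ?E)"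
  have "?P (SOME c. ?P c)" using c by (intro someI[of ?P c]) simp
  then show ?thesis using d(2) unfolding witE_def by blast
qed

lemma Dl_allwit: assumes a: "All x A \<notin> Dl" and sG: "sentence num (All x A)"
  shows "\<exists>c. sort_ok num x (Cst c) \<and> sub1 x (Cst c) A \<notin> Dl"
proof -
  let ?G = "All x A"
  let ?k = "to_nat ?G"
  let ?S = "fst (ch ?k)" and ?E = "snd (ch ?k)"
  have p: "prv (insert ?G ?S) (edisj ?E)"
    using at_step[OF sG] a in_Dl[of ?G "Suc ?k"] by auto
  then have chs: "ch (Suc ?k) = (?S, exwit ?S (edisj (?G # ?E)) ?G @ ?G # ?E)"
    using at_step[OF sG] by auto
  have i: "inv (?S, ?E)" using inv_ch[of ?k] by simp
  have np2: "\<not> prv ?S (Or ?G (edisj ?E))" using L_Excl[OF p] i by (auto simp: inv_def)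
  obtain c where c: "sort_ok num x (Cst c)" "\<not> prv ?S (Or (sub1 x (Cst c) A) (Or ?G (edisj ?E)))"
    using exA_wit[OF i sG refl np2] by blast
  let ?P = "\<lambda>c. sort_ok num x (Cst c) \<and> \<not> prv ?S (Or (sub1 x (Cst c) A) (Or ?G (edisj ?E)))"
  have P: "?P (SOME c. ?P c)" using c by (intro someI[of ?P c]) simp
  have "witA ?S (edisj (?G # ?E)) x A \<in> El" using chs in_El[of _ "Suc ?k"] by (metis list.set_intros(1) snd_conv exwit.simps(1) append_Cons)
  then have "sub1 x (Cst (SOME c. ?P c)) A \<notin> Dl" using Dl_El_disj unfolding witA_def by auto
  then show ?thesis using P by blast
qed

end
end



fun gform :: "('c,'p) gatom \<Rightarrow> ('c,'p) form" where
  "gform (GP p cs) = Pred p (map Cst cs)"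
| "gform (GAL X V A cs) = AtLeast X V A (map Cst cs)"
| "gform (GAM X V A cs) = AtMost X V A (map Cst cs)"


context L begin

definition thy :: "('c,'p) form set \<Rightarrow> bool" where
  "thy \<Theta> = ((\<forall>G\<in>\<Theta>. sentence num G) \<and> (\<forall>D G. finite D \<longrightarrow> D \<subseteq> \<Theta> \<longrightarrow> prv D G \<longrightarrow> sentence num G \<longrightarrow> G \<in> \<Theta>)
     \<and> Bot \<notin> \<Theta>)"

lemma thyD: assumes "thy \<Theta>"
  shows "G \<in> \<Theta> \<Longrightarrow> sentence num G"
    and "finite D \<Longrightarrow> D \<subseteq> \<Theta> \<Longrightarrow> prv D G \<Longrightarrow> sentence num G \<Longrightarrow> G \<in> \<Theta>"
    and "Bot \<notin> \<Theta>"
  using assms by (auto simp: thy_def)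

lemma sent_wfs: "\<forall>G\<in>D. sentence num G \<Longrightarrow> finite D \<Longrightarrow> wfs D" by (simp add: wfs_sent)

lemma T_cl1: "thy \<Theta> \<Longrightarrow> A \<in> \<Theta> \<Longrightarrow> prv {A} G \<Longrightarrow> sentence num G \<Longrightarrow> G \<in> \<Theta>"
  by (rule thyD(2)[of \<Theta> "{A}"]) auto

lemma T_cl2: "thy \<Theta> \<Longrightarrow> A \<in> \<Theta> \<Longrightarrow> B \<in> \<Theta> \<Longrightarrow> prv {A, B} G \<Longrightarrow> sentence num G \<Longrightarrow> G \<in> \<Theta>"
  by (rule thyD(2)[of \<Theta> "{A, B}"]) auto

lemma T_cl0: "thy \<Theta> \<Longrightarrow> prv {} G \<Longrightarrow> sentence num G \<Longrightarrow> G \<in> \<Theta>"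
  by (rule thyD(2)[of \<Theta> "{}"]) auto

lemma T_ax: "thy \<Theta> \<Longrightarrow> G \<in> Axioms num \<union> Gam \<Longrightarrow> sentence num G \<Longrightarrow> G \<in> \<Theta>"
  by (rule T_cl0) (auto intro!: P_ax simp: wfs_def sentence_def)

lemma wfs1: "sentence num A \<Longrightarrow> wfs {A}" by (simp add: wfs_def sentence_def)
lemma wfs2: "sentence num A \<Longrightarrow> sentence num B \<Longrightarrow> wfs {A, B}" by (simp add: wfs_def sentence_def)

lemma T_and: assumes T: "thy \<Theta>" and s: "sentence num (And A B)"
  shows "And A B \<in> \<Theta> \<longleftrightarrow> A \<in> \<Theta> \<and> B \<in> \<Theta>"
proof -
  have sA: "sentence num A" "sentence num B" using s by (auto simp: sentence_def)
  show ?thesis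
  proof safe
    assume "And A B \<in> \<Theta>"
    moreover have "prv {And A B} A" "prv {And A B} B"
      using wfs1[OF s] by (auto intro: P_andE1 P_andE2 P_assmI)
    ultimately show "A \<in> \<Theta>" "B \<in> \<Theta>" using T_cl1[OF T] sA by blast+
  next
    assume "A \<in> \<Theta>" "B \<in> \<Theta>"
    moreover have "prv {A, B} A" "prv {A, B} B" using wfs2[OF sA] by (auto intro: P_assmI)
    then have "prv {A, B} (And A B)" by (rule P_andI)
    ultimately show "And A B \<in> \<Theta>" using T_cl2[OF T] s by blast
  qed
qed

lemma T_orI: assumes T: "thy \<Theta>" and s: "sentence num (Or A B)" and ab: "A \<in> \<Theta> \<or> B \<in> \<Theta>"
  shows "Or A B \<in> \<Theta>"
proof -
  have sA: "sentence num A" "sentence num B" using s by (auto simp: sentence_def)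
  have "prv {A} A" "prv {B} B" using wfs1[OF sA(1)] wfs1[OF sA(2)] by (auto intro: P_assmI)
  then have "prv {A} (Or A B)" "prv {B} (Or A B)"
    using sA by (auto intro: P_orI1 P_orI2 simp: sentence_def)
  then show ?thesis using ab T_cl1[OF T] s by blast
qed

lemma T_mp: assumes T: "thy \<Theta>" and i: "Imp A B \<in> \<Theta>" "A \<in> \<Theta>" shows "B \<in> \<Theta>"
proof -
  have s: "sentence num (Imp A B)" "sentence num A" using i thyD(1)[OF T] by auto
  then have sB: "sentence num B" by (simp add: sentence_def)
  have "prv {Imp A B, A} B" using wfs2[OF s] by (auto intro!: P_impE[OF P_assmI P_assmI])
  then show ?thesis using T_cl2[OF T i] sB by blast
qed

lemma T_impB: assumes T: "thy \<Theta>" and s: "sentence num (Imp A B)" and b: "B \<in> \<Theta>" shows "Imp A B \<in> \<Theta>"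
proof -
  have sB: "sentence num B" "wf num A" using s by (auto simp: sentence_def)
  have "prv {B} (Imp A B)" by (rule L_ImpB[OF P_assmI]) (use wfs1[OF sB(1)] sB in auto)
  then show ?thesis using T_cl1[OF T b] s by blast
qed

lemma T_impNeg: assumes T: "thy \<Theta>" and s: "sentence num (Imp A B)" and b: "Neg A \<in> \<Theta>" shows "Imp A B \<in> \<Theta>"
proof -
  have sB: "sentence num (Neg A)" "wf num B" using s by (auto simp: sentence_def)
  have "prv {Neg A} (Imp A B)" by (rule L_NegImp[OF P_assmI]) (use wfs1[OF sB(1)] sB in auto)
  then show ?thesis using T_cl1[OF T b] s by blast
qed

lemma T_neg: assumes T: "thy \<Theta>" and a: "A \<in> \<Theta>" "Neg A \<in> \<Theta>" shows False
proof -
  have s: "sentence num A" "sentence num (Neg A)" using a thyD(1)[OF T] by auto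
  have "prv {A, Neg A} Bot" using wfs2[OF s] by (auto intro!: P_negE[OF P_assmI P_assmI])
  then have "Bot \<in> \<Theta>" using T_cl2[OF T a] by (simp add: sentence_def)
  then show False using thyD(3)[OF T] by simp
qed

lemma T_allE: assumes T: "thy \<Theta>" and a: "All x A \<in> \<Theta>" and c: "sort_ok num x (Cst c)"
  shows "sub1 x (Cst c) A \<in> \<Theta>"
proof -
  have s: "sentence num (All x A)" using a thyD(1)[OF T] by auto
  have "prv {All x A} (All x A)" by (rule P_assmI) (use wfs1[OF s] in auto)
  then have "prv {All x A} (sub1 x (Cst c) A)" using c by (rule P_allE)
  then show ?thesis using T_cl1[OF T a] sentence_wit(1)[OF s c] by blast
qed

lemma T_exI: assumes T: "thy \<Theta>" and s: "sentence num (Ex x A)" and a: "sub1 x (Cst c) A \<in> \<Theta>"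
  and c: "sort_ok num x (Cst c)"
  shows "Ex x A \<in> \<Theta>"
proof -
  have sa: "sentence num (sub1 x (Cst c) A)" by (rule sentence_wit(2)[OF s c])
  have "prv {sub1 x (Cst c) A} (sub1 x (Cst c) A)" by (rule P_assmI) (use wfs1[OF sa] in auto)
  then have "prv {sub1 x (Cst c) A} (Ex x A)"
    using c by (rule P_exI) (use s in \<open>auto simp: sentence_def\<close>)
  then show ?thesis using T_cl1[OF T a] s by blast
qed

lemma closed_substt: "fvt u = {} \<Longrightarrow> substt s u = u"
  by (rule substt_id) auto

lemma T_cmp: assumes T: "thy \<Theta>" and s: "sentence num G" and G: "nopred G" "sigma0 G"
  shows "G \<in> \<Theta> \<longleftrightarrow> csat num {} (env0 num) G"
proof
  assume g: "G \<in> \<Theta>"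
  show "csat num {} (env0 num) G"
  proof (rule ccontr)
    assume n: "\<not> csat num {} (env0 num) G"
    have "Neg G \<in> \<Theta>"
      by (rule T_ax[OF T]) (use s G n in \<open>auto intro!: Std_ax simp: sentence_def Neg_def\<close>)
    then show False using T_neg[OF T g] by simp
  qed
next
  assume "csat num {} (env0 num) G"
  then have "G \<in> Axioms num" using s G by (intro Std_ax) auto
  then show "G \<in> \<Theta>" using s by (intro T_ax[OF T]) auto
qed

end

locale atommk =
  fixes num :: "int \<Rightarrow> 'c" and mk :: "'c trm list \<Rightarrow> ('c,'p) form" and Q :: "nat \<Rightarrow> bool"
  assumes mk_subst: "\<And>s ts. subst s (mk ts) = mk (map (substt s) ts)"
    and mk_substok: "\<And>s ts. substok s (mk ts)"
    and mk_fv: "\<And>ts. fv (mk ts) = \<Union> (fvt ` set ts)"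
    and mk_wf: "\<And>ts. wf num (mk ts) = (Q (length ts) \<and> list_all (wf_trm num) ts)"

lemma atommk_Pred: "atommk num (Pred p) (\<lambda>_. True)"
  by unfold_locales auto
lemma atommk_AtLeast: "atommk num (AtLeast X V A) (\<lambda>n. distinct X \<and> distinct V \<and> set X \<inter> set V = {} \<and> sigma0 A
     \<and> wf num A \<and> fv A \<subseteq> GV ` (set X \<union> set V) \<and> n = Suc (length V))"
  by unfold_locales auto
lemma atommk_AtMost: "atommk num (AtMost X V A) (\<lambda>n. distinct X \<and> distinct V \<and> set X \<inter> set V = {} \<and> sigma0 A
     \<and> wf num A \<and> fv A \<subseteq> GV ` (set X \<union> set V) \<and> n = Suc (length V))"
  by unfold_locales auto

context L begin

lemma T_repl1:
  assumes T: "thy \<Theta>" and am: "atommk num mk Q"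
    and s1: "sentence num (mk (us @ t1 # ts))" and s2: "sentence num (mk (us @ t2 # ts))"
    and ev: "eval num (env0 num) t1 = eval num (env0 num) t2"
    and m: "mk (us @ t1 # ts) \<in> \<Theta>"
  shows "mk (us @ t2 # ts) \<in> \<Theta>"
proof -
  interpret atommk num mk Q by (rule am)
  let ?x = "GV 0"
  let ?G = "mk (us @ Var ?x # ts)"
  let ?D = "{mk (us @ t1 # ts)}"
  have cl: "\<forall>u\<in>set us \<union> set ts. fvt u = {}" "fvt t1 = {}" "fvt t2 = {}" using s1 s2 by (auto simp: sentence_def mk_fv)
  have wt: "wf_trm num t1" "wf_trm num t2" using s1 s2 by (auto simp: sentence_def mk_wf list_all_iff)
  have sub: "sub1 ?x t (mk (us @ Var ?x # ts)) = mk (us @ t # ts)" if "fvt t = {}" for t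
  proof -
    have "map (substt ((\<lambda>v. Var v)(?x := t))) us = us" "map (substt ((\<lambda>v. Var v)(?x := t))) ts = ts"
      using cl by (auto intro!: map_idI closed_substt)
    then show ?thesis by (simp add: sub1_def mk_subst)
  qed
  have wD: "wfs ?D" using s1 by (rule wfs1)
  have eq: "prv ?D (Eq t1 t2)"
    by (rule P_ax[OF _ _ wD]) (use wt cl ev in \<open>auto intro!: Std_ax simp: sentence_def\<close>)
  have p1: "prv ?D (sub1 ?x t1 ?G)" using sub[OF cl(2)] wD by (auto intro: P_assmI)
  have "prv ?D (sub1 ?x t2 ?G)"
    by (rule deriv.eqSubst[OF eq p1]) (use sub[OF cl(3)] wD s2 in \<open>auto simp: sub1ok_def mk_substok wfseqI sentence_def\<close>)
  then have "prv ?D (mk (us @ t2 # ts))" using sub[OF cl(3)] by simp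
  then show ?thesis using T_cl1[OF T m] s2 by blast
qed

lemma T_repl:
  assumes T: "thy \<Theta>" and am: "atommk num mk Q"
  shows "sentence num (mk (us @ ts)) \<Longrightarrow>
    mk (us @ ts) \<in> \<Theta> \<longleftrightarrow> mk (us @ map (\<lambda>t. Cst (eval num (env0 num) t)) ts) \<in> \<Theta>"
proof (induction ts arbitrary: us)
  case (Cons t ts)
  interpret atommk num mk Q by (rule am)
  let ?v = "eval num (env0 num) t"
  have s2: "sentence num (mk (us @ Cst ?v # ts))"
    using Cons.prems by (auto simp: sentence_def mk_fv mk_wf list_all_iff)
  have "mk (us @ t # ts) \<in> \<Theta> \<longleftrightarrow> mk (us @ Cst ?v # ts) \<in> \<Theta>"
    using T_repl1[OF T am Cons.prems s2] T_repl1[OF T am s2 Cons.prems] by auto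
  also have "\<dots> \<longleftrightarrow> mk ((us @ [Cst ?v]) @ map (\<lambda>t. Cst (eval num (env0 num) t)) ts) \<in> \<Theta>"
    using Cons.IH[of "us @ [Cst ?v]"] s2 by simp
  finally show ?case by simp
qed simp

lemma T_atom:
  assumes T: "thy \<Theta>" and am: "atommk num mk Q" and s: "sentence num (mk ts)"
  shows "mk ts \<in> \<Theta> \<longleftrightarrow> mk (map Cst (map (eval num (env0 num)) ts)) \<in> \<Theta>"
  using T_repl[OF T am, of "[]" ts] s by (simp add: comp_def)

context
  fixes F :: "('c,'p) form"
  assumes F: "sentence num F" "\<not> prv {} F"
begin

abbreviation Dh where "Dh \<equiv> Dl F"

definition Dt :: "('c,'p) form set" where "Dt = {G. sentence num G \<and> nn G \<in> Dh}"

definition Hm :: "('c,'p) gatom set" where "Hm = {a. gform a \<in> Dh}"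
definition Tm :: "('c,'p) gatom set" where "Tm = {a. gform a \<in> Dt}"

lemma sentence_nn: "sentence num (nn G) = sentence num G" by (simp add: nn_def sentence_def)

lemma thy_Dh: "thy Dh"
proof -
  have "Bot \<notin> Dh"
  proof
    assume b: "Bot \<in> Dh"
    have "prv {Bot} F" by (rule P_botE[OF P_assmI]) (use F in \<open>auto simp: wfs_def sentence_def\<close>)
    then have "F \<in> Dh" using Dl_closed[OF F, of "{Bot}"] b F by auto
    then show False using F_notin[OF F] by simp
  qed
  then show ?thesis using Dl_sent[OF F] Dl_closed[OF F] by (auto simp: thy_def)
qed

lemma Dh_sub_Dt: "G \<in> Dh \<Longrightarrow> G \<in> Dt"
proof -
  assume g: "G \<in> Dh"
  have s: "sentence num G" using thyD(1)[OF thy_Dh g] .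
  have "prv {G} (nn G)" by (rule L_NN1[OF P_assmI]) (use wfs1[OF s] in auto)
  then have "nn G \<in> Dh" using T_cl1[OF thy_Dh g] s by (simp add: sentence_nn)
  then show ?thesis using s by (simp add: Dt_def)
qed

lemma thy_Dt: "thy Dt"
proof -
  have cl: "G \<in> Dt" if "finite D" "D \<subseteq> Dt" "prv D G" "sentence num G" for D G
  proof -
    have "prv (nn ` D) (nn G)" by (rule L_NNset[OF that(1,3)])
    moreover have "nn ` D \<subseteq> Dh" using that(2) by (auto simp: Dt_def)
    ultimately have "nn G \<in> Dh" using thyD(2)[OF thy_Dh, of "nn ` D" "nn G"] that by (simp add: sentence_nn)
    then show ?thesis using that by (simp add: Dt_def)
  qed
  have "Bot \<notin> Dt"
  proof
    assume "Bot \<in> Dt"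
    then have b: "nn Bot \<in> Dh" by (simp add: Dt_def)
    have "prv {nn Bot} Bot" by (rule L_NNbot[OF P_assmI]) (auto simp: wfs_def nn_def)
    then have "Bot \<in> Dh" using T_cl1[OF thy_Dh b] by (simp add: sentence_def)
    then show False using thyD(3)[OF thy_Dh] by simp
  qed
  then show ?thesis using cl by (auto simp: thy_def Dt_def)
qed

lemma Dt_compl: assumes s: "sentence num A" and n: "A \<notin> Dt" shows "Neg A \<in> Dt"
proof -
  have "prv {} (Or (Neg A) (nn A))" by (rule L_WEM) (use s in \<open>auto simp: wfs_def sentence_def\<close>)
  then have "Or (Neg A) (nn A) \<in> Dh" using T_cl0[OF thy_Dh] s by (simp add: sentence_def nn_def)
  then have "Neg A \<in> Dh \<or> nn A \<in> Dh" by (rule Dl_prime[OF F])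
  then show ?thesis using n s Dh_sub_Dt by (auto simp: Dt_def)
qed

lemma Dt_prime: assumes o: "Or A B \<in> Dt" shows "A \<in> Dt \<or> B \<in> Dt"
proof (rule ccontr)
  assume na: "\<not> ?thesis"
  have s: "sentence num A" "sentence num B" using thyD(1)[OF thy_Dt o] by (auto simp: sentence_def)
  have n: "Neg A \<in> Dt" "Neg B \<in> Dt" using Dt_compl s na by auto
  have w: "wfs {Or A B, Neg A, Neg B}" using s by (auto simp: wfs_def sentence_def)
  have "prv {Or A B, Neg A, Neg B} Bot"
    by (rule L_OrNeg[OF P_assmI P_assmI P_assmI]) (use w in auto)
  then have "Bot \<in> Dt" using thyD(2)[OF thy_Dt, of "{Or A B, Neg A, Neg B}" Bot] o n by (auto simp: sentence_def)
  then show False using thyD(3)[OF thy_Dt] by simp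
qed

lemma Dt_imp: assumes s: "sentence num (Imp A B)" and h: "A \<in> Dt \<Longrightarrow> B \<in> Dt" shows "Imp A B \<in> Dt"
proof (cases "A \<in> Dt")
  case True then show ?thesis using h T_impB[OF thy_Dt s] by blast
next
  case False
  then have "Neg A \<in> Dt" using Dt_compl s by (auto simp: sentence_def)
  then show ?thesis using T_impNeg[OF thy_Dt s] by blast
qed

lemma Dh_omega: assumes s: "sentence num (All x A)" and h: "\<And>c. sort_ok num x (Cst c) \<Longrightarrow> sub1 x (Cst c) A \<in> Dh"
  shows "All x A \<in> Dh"
  using Dl_allwit[OF F _ s] h by blast

lemma Dt_omegaG: assumes s: "sentence num (All (GV n) A)" and h: "\<And>c. sub1 (GV n) (Cst c) A \<in> Dt"
  shows "All (GV n) A \<in> Dt"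
proof -
  have "sub1 (GV n) (Cst c) (nn A) \<in> Dh" for c using h[of c] by (simp add: Dt_def nn_def)
  then have a: "All (GV n) (nn A) \<in> Dh" using s by (intro Dh_omega) (auto simp: sentence_def nn_def)
  have sa: "sentence num (All (GV n) (nn A))" using s by (auto simp: sentence_def nn_def)
  have "prv {All (GV n) (nn A)} (nn (All (GV n) A))"
    by (rule L_NNall[OF P_assmI]) (use wfs1[OF sa] sa s in \<open>auto simp: fvs_def sentence_def\<close>)
  then have "nn (All (GV n) A) \<in> Dh" using T_cl1[OF thy_Dh a] s by (simp add: sentence_nn)
  then show ?thesis using s by (simp add: Dt_def)
qed

lemma Dt_omegaI: assumes s: "sentence num (All (IV n) A)" and h: "\<And>k. sub1 (IV n) (Cst (num k)) A \<in> Dt"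
  shows "All (IV n) A \<in> Dt"
proof -
  have A: "wf num A" "fv A \<subseteq> {IV n}" using s by (auto simp: sentence_def)
  have sK: "sentence num (Kc n c A)" for c using A by (auto simp: sentence_def Kc_def)
  have "Kc n c A \<in> Dt" for c
  proof (cases "c \<in> range num")
    case True
    then obtain j where j: "c = num j" by auto
    let ?Aj = "sub1 (IV n) (Cst (num j)) A"
    have sj: "sentence num ?Aj" by (rule sentence_wit(1)[OF s]) simp
    have "prv {?Aj} (Kc n c A)"
    proof (rule L_Kc[OF wfs1[OF sj] A])
      fix k assume "c = num k"
      then have "k = j" using j num_inj by simp
      then show "prv {?Aj} (sub1 (IV n) (Cst (num k)) A)" using wfs1[OF sj] by (auto intro: P_assmI)
    qed
    then show ?thesis using T_cl1[OF thy_Dt h[of j] _ sK] by blast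
  next
    case False
    have "prv {} (Kc n c A)" by (rule L_Kc[OF _ A]) (use False in \<open>auto simp: wfs_def\<close>)
    then show ?thesis using T_cl0[OF thy_Dt _ sK] by blast
  qed
  then have "sub1 (GV 0) (Cst c) (K n A) \<in> Dt" for c using sub1_K[OF A(2)] by simp
  then have a: "All (GV 0) (K n A) \<in> Dt"
    by (intro Dt_omegaG) (use A wf_K fv_K[OF A(2)] in \<open>auto simp: sentence_def\<close>)
  have sa: "sentence num (All (GV 0) (K n A))" using A wf_K fv_K[OF A(2)] by (auto simp: sentence_def)
  have "prv {All (GV 0) (K n A)} (All (IV n) A)" by (rule L_K3[OF P_assmI A]) (use wfs1[OF sa] in auto)
  then show ?thesis using T_cl1[OF thy_Dt a] s by blast
qed

lemma Dt_omega: assumes s: "sentence num (All x A)" and h: "\<And>c. sort_ok num x (Cst c) \<Longrightarrow> sub1 x (Cst c) A \<in> Dt"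
  shows "All x A \<in> Dt"
proof (cases x)
  case (GV n) then show ?thesis using Dt_omegaG s h by simp
next
  case (IV n) then show ?thesis using Dt_omegaI s h by simp
qed

lemma Dt_ex: assumes e: "Ex x A \<in> Dt" shows "\<exists>c. sort_ok num x (Cst c) \<and> sub1 x (Cst c) A \<in> Dt"
proof (rule ccontr)
  assume n: "\<not> ?thesis"
  have s: "sentence num (Ex x A)" using thyD(1)[OF thy_Dt e] .
  have sA: "sentence num (All x (Neg A))" using s by (auto simp: sentence_def)
  have "sub1 x (Cst c) (Neg A) \<in> Dt" if "sort_ok num x (Cst c)" for c
    using Dt_compl[OF sentence_wit(2)[OF s that]] n that by auto
  then have a: "All x (Neg A) \<in> Dt" by (intro Dt_omega[OF sA])
  have w: "wfs {Ex x A, All x (Neg A)}" using wfs2[OF s sA] .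
  have "prv {Ex x A, All x (Neg A)} Bot"
    by (rule L_ExAllNeg[OF P_assmI P_assmI]) (use w s sA in \<open>auto simp: fvs_def sentence_def\<close>)
  then have "Bot \<in> Dt" using T_cl2[OF thy_Dt e a] by (simp add: sentence_def)
  then show False using thyD(3)[OF thy_Dt] by simp
qed

lemma sentence_gform_eval:
  "sentence num (Pred p ts) \<Longrightarrow> sentence num (Pred p (map Cst (map (eval num (env0 num)) ts)))"
  "sentence num (AtLeast X V A ts) \<Longrightarrow> sentence num (AtLeast X V A (map Cst (map (eval num (env0 num)) ts)))"
  "sentence num (AtMost X V A ts) \<Longrightarrow> sentence num (AtMost X V A (map Cst (map (eval num (env0 num)) ts)))"
  by (auto simp: sentence_def list_all_iff)

lemma truth_T: "sentence num G \<Longrightarrow> csat num Tm (env0 num) G \<longleftrightarrow> G \<in> Dt"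
proof (induction G rule: measure_induct_rule[where f = fsz])
  case (less G)
  have T: "thy Dt" by (rule thy_Dt)
  show ?case
  proof (cases G)
    case Bot then show ?thesis using thyD(3)[OF T] by simp
  next
    case (Pred p ts)
    then show ?thesis using T_atom[OF T atommk_Pred less.prems[unfolded Pred]] by (simp add: Tm_def)
  next
    case (AtLeast X V A ts)
    then show ?thesis using T_atom[OF T atommk_AtLeast less.prems[unfolded AtLeast]] by (simp add: Tm_def)
  next
    case (AtMost X V A ts)
    then show ?thesis using T_atom[OF T atommk_AtMost less.prems[unfolded AtMost]] by (simp add: Tm_def)
  next
    case (Cmp c a b)
    then show ?thesis using T_cmp[OF T less.prems] by simp
  next
    case (Eq a b)
    then show ?thesis using T_cmp[OF T less.prems] by simp
  next
    case (And A B)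
    have s: "sentence num A" "sentence num B" using less.prems And by (auto simp: sentence_def)
    then show ?thesis using less.IH[of A] less.IH[of B] T_and[OF T less.prems[unfolded And]] And by simp
  next
    case (Or A B)
    have s: "sentence num A" "sentence num B" using less.prems Or by (auto simp: sentence_def)
    then show ?thesis using less.IH[of A] less.IH[of B] T_orI[OF T less.prems[unfolded Or]] Dt_prime Or
      by auto
  next
    case (Imp A B)
    have s: "sentence num A" "sentence num B" using less.prems Imp by (auto simp: sentence_def)
    then show ?thesis using less.IH[of A] less.IH[of B] T_mp[OF T] Dt_imp[OF less.prems[unfolded Imp]] Imp
      by auto
  next
    case (All x A)
    have ih: "csat num Tm (env0 num) (sub1 x (Cst c) A) \<longleftrightarrow> sub1 x (Cst c) A \<in> Dt" if "sort_ok num x (Cst c)" for c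
      using less.IH[of "sub1 x (Cst c) A"] sentence_wit(1)[OF less.prems[unfolded All] that] All by simp
    have "csat num Tm (env0 num) G \<longleftrightarrow> (\<forall>c. sort_ok num x (Cst c) \<longrightarrow> csat num Tm (env0 num) (sub1 x (Cst c) A))"
      using All by (cases x) (auto simp: csat_sub1)
    also have "\<dots> \<longleftrightarrow> (\<forall>c. sort_ok num x (Cst c) \<longrightarrow> sub1 x (Cst c) A \<in> Dt)" using ih by auto
    also have "\<dots> \<longleftrightarrow> G \<in> Dt" using All T_allE[OF T] Dt_omega[OF less.prems[unfolded All]] by auto
    finally show ?thesis .
  next
    case (Ex x A)
    have ih: "csat num Tm (env0 num) (sub1 x (Cst c) A) \<longleftrightarrow> sub1 x (Cst c) A \<in> Dt" if "sort_ok num x (Cst c)" for c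
      using less.IH[of "sub1 x (Cst c) A"] sentence_wit(2)[OF less.prems[unfolded Ex] that] Ex by simp
    have "csat num Tm (env0 num) G \<longleftrightarrow> (\<exists>c. sort_ok num x (Cst c) \<and> csat num Tm (env0 num) (sub1 x (Cst c) A))"
      using Ex by (cases x) (auto simp: csat_sub1)
    also have "\<dots> \<longleftrightarrow> (\<exists>c. sort_ok num x (Cst c) \<and> sub1 x (Cst c) A \<in> Dt)" using ih by auto
    also have "\<dots> \<longleftrightarrow> G \<in> Dt" using Ex T_exI[OF T less.prems[unfolded Ex]] Dt_ex by auto
    finally show ?thesis .
  qed
qed

lemma truth_H: "sentence num G \<Longrightarrow> htsat num Hm Tm (env0 num) G \<longleftrightarrow> G \<in> Dh"
proof (induction G rule: measure_induct_rule[where f = fsz])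
  case (less G)
  have T: "thy Dh" by (rule thy_Dh)
  show ?case
  proof (cases G)
    case Bot then show ?thesis using thyD(3)[OF T] by simp
  next
    case (Pred p ts)
    then show ?thesis using T_atom[OF T atommk_Pred less.prems[unfolded Pred]] by (simp add: Hm_def)
  next
    case (AtLeast X V A ts)
    then show ?thesis using T_atom[OF T atommk_AtLeast less.prems[unfolded AtLeast]] by (simp add: Hm_def)
  next
    case (AtMost X V A ts)
    then show ?thesis using T_atom[OF T atommk_AtMost less.prems[unfolded AtMost]] by (simp add: Hm_def)
  next
    case (Cmp c a b)
    then show ?thesis using T_cmp[OF T less.prems] by simp
  next
    case (Eq a b)
    then show ?thesis using T_cmp[OF T less.prems] by simp
  next
    case (And A B)
    have s: "sentence num A" "sentence num B" using less.prems And by (auto simp: sentence_def)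
    then show ?thesis using less.IH[of A] less.IH[of B] T_and[OF T less.prems[unfolded And]] And by simp
  next
    case (Or A B)
    have s: "sentence num A" "sentence num B" using less.prems Or by (auto simp: sentence_def)
    then show ?thesis using less.IH[of A] less.IH[of B] T_orI[OF T less.prems[unfolded Or]] Dl_prime[OF F] Or
      by auto
  next
    case (Imp A B)
    have s: "sentence num A" "sentence num B" using less.prems Imp by (auto simp: sentence_def)
    have sI: "sentence num (Imp A B)" using less.prems Imp by simp
    have ihA: "htsat num Hm Tm (env0 num) A \<longleftrightarrow> A \<in> Dh" and ihB: "htsat num Hm Tm (env0 num) B \<longleftrightarrow> B \<in> Dh"
      using less.IH[of A] less.IH[of B] s Imp by auto
    have cs: "csat num Tm (env0 num) (Imp A B) \<longleftrightarrow> (A \<in> Dt \<longrightarrow> B \<in> Dt)"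
      using truth_T[OF s(1)] truth_T[OF s(2)] by simp
    have d1: "(A \<in> Dh \<longrightarrow> B \<in> Dh) \<and> (A \<in> Dt \<longrightarrow> B \<in> Dt)" if "Imp A B \<in> Dh"
      using that T_mp[OF T] T_mp[OF thy_Dt] Dh_sub_Dt by blast
    have d2: "Imp A B \<in> Dh" if h1: "A \<in> Dh \<longrightarrow> B \<in> Dh" and h2: "A \<in> Dt \<longrightarrow> B \<in> Dt"
    proof -
      have "Or A (Or (Imp A B) (Neg B)) \<in> Dh"
        by (rule T_ax[OF T]) (use HT_ax s in \<open>auto simp: sentence_def\<close>)
      then have c: "A \<in> Dh \<or> Imp A B \<in> Dh \<or> Neg B \<in> Dh" using Dl_prime[OF F] by blast
      show "Imp A B \<in> Dh"
      proof -
        { assume "A \<in> Dh" then have ?thesis using h1 T_impB[OF T sI] by blast }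
        moreover
        { assume nb: "Neg B \<in> Dh"
          have "B \<notin> Dt" using nb Dh_sub_Dt T_neg[OF thy_Dt] by blast
          then have "A \<notin> Dt" using h2 by blast
          then have "nn A \<notin> Dh" using s by (simp add: Dt_def)
          moreover have "prv {} (Or (Neg A) (nn A))" by (rule L_WEM) (use s in \<open>auto simp: wfs_def sentence_def\<close>)
          then have "Or (Neg A) (nn A) \<in> Dh" using T_cl0[OF T] s by (simp add: sentence_def nn_def)
          ultimately have "Neg A \<in> Dh" using Dl_prime[OF F] by blast
          then have ?thesis using T_impNeg[OF T sI] by blast }
        ultimately show ?thesis using c by blast
      qed
    qed
    have "Imp A B \<in> Dh \<longleftrightarrow> (A \<in> Dh \<longrightarrow> B \<in> Dh) \<and> (A \<in> Dt \<longrightarrow> B \<in> Dt)"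
      using d1 d2 by blast
    then show ?thesis using ihA ihB cs Imp by simp
  next
    case (All x A)
    have ih: "htsat num Hm Tm (env0 num) (sub1 x (Cst c) A) \<longleftrightarrow> sub1 x (Cst c) A \<in> Dh" if "sort_ok num x (Cst c)" for c
      using less.IH[of "sub1 x (Cst c) A"] sentence_wit(1)[OF less.prems[unfolded All] that] All by simp
    have "htsat num Hm Tm (env0 num) G \<longleftrightarrow> (\<forall>c. sort_ok num x (Cst c) \<longrightarrow> htsat num Hm Tm (env0 num) (sub1 x (Cst c) A))"
      using All by (cases x) (auto simp: htsat_sub1)
    also have "\<dots> \<longleftrightarrow> (\<forall>c. sort_ok num x (Cst c) \<longrightarrow> sub1 x (Cst c) A \<in> Dh)" using ih by auto
    also have "\<dots> \<longleftrightarrow> G \<in> Dh" using All T_allE[OF T] Dh_omega[OF less.prems[unfolded All]] by auto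
    finally show ?thesis .
  next
    case (Ex x A)
    have ih: "htsat num Hm Tm (env0 num) (sub1 x (Cst c) A) \<longleftrightarrow> sub1 x (Cst c) A \<in> Dh" if "sort_ok num x (Cst c)" for c
      using less.IH[of "sub1 x (Cst c) A"] sentence_wit(2)[OF less.prems[unfolded Ex] that] Ex by simp
    have "htsat num Hm Tm (env0 num) G \<longleftrightarrow> (\<exists>c. sort_ok num x (Cst c) \<and> htsat num Hm Tm (env0 num) (sub1 x (Cst c) A))"
      using Ex by (cases x) (auto simp: htsat_sub1)
    also have "\<dots> \<longleftrightarrow> (\<exists>c. sort_ok num x (Cst c) \<and> sub1 x (Cst c) A \<in> Dh)" using ih by auto
    also have "\<dots> \<longleftrightarrow> G \<in> Dh" using Ex T_exI[OF T less.prems[unfolded Ex]] Dl_exwit[OF F] by auto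
    finally show ?thesis .
  qed
qed

lemma countermodel:
  "standard_ht num Hm Tm \<and> (\<forall>G\<in>Gam. ht_models num Hm Tm G) \<and> \<not> ht_models num Hm Tm F"
proof -
  have "Hm \<subseteq> Tm" using Dh_sub_Dt by (auto simp: Hm_def Tm_def)
  moreover have "ht_models num Hm Tm D" if "D \<in> DefsAx num" for D
  proof -
    have s: "sentence num D" using DefsAx_sentence[OF that] .
    have "D \<in> Dh" by (rule T_ax[OF thy_Dh _ s]) (use that in \<open>auto simp: Axioms_def\<close>)
    then show ?thesis using truth_H[OF s] by (simp add: ht_models_def)
  qed
  moreover have "ht_models num Hm Tm G" if "G \<in> Gam" for G
  proof -
    have s: "sentence num G" using Gam_sentences that by blast
    have "G \<in> Dh" by (rule T_ax[OF thy_Dh _ s]) (use that in auto)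
    then show ?thesis using truth_H[OF s] by (simp add: ht_models_def)
  qed
  moreover have "\<not> ht_models num Hm Tm F" using truth_H[OF F(1)] F_notin[OF F] by (simp add: ht_models_def)
  ultimately show ?thesis by (auto simp: standard_ht_def)
qed

end

theorem completeness:
  assumes F: "sentence num F"
    and sem: "\<forall>H T. standard_ht num H T \<longrightarrow> (\<forall>G\<in>Gam. ht_models num H T G) \<longrightarrow> ht_models num H T F"
  shows "derivable num Gam F"
  using countermodel[OF F] sem unfolding derivable_def by blast

end

theorem mainTheorem13:
  fixes num :: "int \<Rightarrow> 'c::{linorder,countable}"
    and Gam :: "('c, 'p::countable) form set"
    and F :: "('c, 'p) form"
  assumes num_mono: "strict_mono num"
    and num_contiguous: "\<forall>x m n. num m \<le> x \<longrightarrow> x \<le> num n \<longrightarrow> x \<in> range num"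
    and Gam_sentences: "\<forall>G\<in>Gam. sentence num G"
    and F_sentence: "sentence num F"
  shows "derivable num Gam F \<longleftrightarrow>
    (\<forall>H T. standard_ht num H T \<longrightarrow> (\<forall>G\<in>Gam. ht_models num H T G) \<longrightarrow> ht_models num H T F)"
proof -
  interpret L num Gam
    by unfold_locales (rule num_mono, rule num_contiguous, rule Gam_sentences)
  show ?thesis using soundness completeness[OF F_sentence] by blast
qed

end
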